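(* For all $\lambda\in[0,1]$, all $x,x'\in\{0,1\}^{2n}$ and all $z,z'\in\{0,1\}^{2n}$ of Hamming weight $n$, $$\,{}_V\langle x',z'|\bigl(H_{\rm circuit}(\lambda)-\sqrt{1-\lambda^2}\,I\bigr)|x,z\rangle_V=2\,\delta_{x',x}\,\langle z'|H_{\rm XXZ}(\lambda)|z\rangle ,$$ and $S_{\rm string}$ is invariant under $H_{\rm circuit}(\lambda)$.
   Context: Grid. Fix $n\ge1$. Vertices $(i,j)$, $i,j\in\{0,\dots,n\}$. The edge $(i,j,x)$ ($x\in\{0,1\}$) joins $(i,j)$ to $(i+1-x,j+x)$ whenever the latter is a vertex; it lies on line $w=i+j+1$ and has horizontal coordinate $t=n+j-i+x$. $E_w$ = edges on line $w$. $\mathcal H=\bigotimes_{w=1}^{2n}(\mathbb C^{E_w}\otimes\mathbb C^2)$ with basis $|e,\alpha\rangle_w$; $n_{e,\alpha}=|e,\alpha\rangle\langle e,\alpha|_w$, $N_e=n_{e,0}+n_{e,1}$. Strings: for $z\in\{0,1\}^{2n}$ of weight $n$, $v_0=(0,0)$, $v_s=(\#\{k\le s:z_k=0\},\#\{k\le s:z_k=1\})$, $e_s(z)=(i,j,z_s)$ with $(i,j)=v_{s-1}$; $|x\rangle|z\rangle=\bigotimes_w|e_w(z),x_w\rangle_w$; $S_{\rm string}$ is their span. Plaquette $p=(i,j)$, $i,j\in\{0,\dots,n-1\}$: $w_p=i+j+1$, $t_p=n+j-i$, left edges $e_1=(i,j,0)$, $e_2=(i+1,j,1)$, right edges $e_3=(i,j,1)$,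 $e_4=(i,j+1,0)$, arbitrary two-qubit unitary $U_p$ on qubits $(w_p,w_p+1)$. $H^p_{\rm prop}=-\sum_{\alpha,\beta,\gamma,\delta}\langle\beta\delta|U_p|\alpha\gamma\rangle|e_3,\beta\rangle\langle e_1,\alpha|_{w_p}\otimes|e_4,\delta\rangle\langle e_2,\gamma|_{w_p+1}+\text{h.c.}$, $H^p_{\rm gate}(\lambda)=N_{e_1}N_{e_2}+N_{e_3}N_{e_4}+\lambda H^p_{\rm prop}$, $H_{\rm init}=N_{(0,0,1)}+N_{(n-1,n,0)}$, $H_{\rm circuit}(\lambda)=\sum_pH^p_{\rm gate}(\lambda)+\sqrt{1-\lambda^2}H_{\rm init}$. Rotated basis: plaquette $p=(i,j)$ lies to the left of string $z$ if $i\ge a$ where $v_{i+j+1}=(a,i+j+1-a)$. $V(z)$ is the product of $U_p$ over plaquettes left of $z$, ordered so that factors with smaller $t_p$ act first (equal-$t_p$ factors act on disjoint qubit pairs). $|x,z\rangle_V=\sum_y\langle y|V(z)|x\rangle|y\rangle|z\rangle$. XXZ chain on $(\mathbb C^2)^{\otimes 2n}$ (Pauli matrices $X,Y,Z$, $Z|0\rangle=|0\rangle$): $H_{\rm XXZ}(\lambda)=\frac14\sqrt{1-\lambda^2}(Z_{2n}-Z_1)-\frac14\sum_{w=1}^{2n-1}\bigl[(Z_wZ_{w+1}-I)+\lambda(X_wX_{w+1}+Y_wY_{w+1})\bigr]$; $\langle z'|H_{\rm XXZ}|z\rangle$ uses the computational basis of $(\mathbb C^2)^{\otimes 2n}$.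 *)

theory Defs
  imports Complex_Main
begin

type_synonym 'a op = "'a \<Rightarrow> 'a \<Rightarrow> complex"  (* A c' c = <c'|A|c> *)
type_synonym 'a vec = "'a \<Rightarrow> complex"

definition mmul :: "'a set \<Rightarrow> 'a op \<Rightarrow> 'a op \<Rightarrow> 'a op" where
  "mmul S A B = (\<lambda>y x. \<Sum>z\<in>S. A y z * B z x)"

definition idop :: "'a op" where
  "idop = (\<lambda>y x. if y = x then 1 else 0)"

definition ket :: "'a \<Rightarrow> 'a vec" where
  "ket c = (\<lambda>c'. if c' = c then 1 else 0)"

definition sandwich :: "'a set \<Rightarrow> 'a vec \<Rightarrow> 'a op \<Rightarrow> 'a vec \<Rightarrow> complex" where
  "sandwich S \<phi> A \<psi> = (\<Sum>c'\<in>S. \<Sum>c\<in>S. cnj (\<phi> c') * A c' c * \<psi> c)"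

definition apply_op :: "'a set \<Rightarrow> 'a op \<Rightarrow> 'a vec \<Rightarrow> 'a vec" where
  "apply_op S A \<psi> = (\<lambda>c'. if c' \<in> S then (\<Sum>c\<in>S. A c' c * \<psi> c) else 0)"

text \<open>Two-qubit unitary: matrix U (out1,out2) (in1,in2); U^dagger U = I and U U^dagger = I.\<close>
definition unitary2 :: "(bool \<times> bool) op \<Rightarrow> bool" where
  "unitary2 U \<longleftrightarrow>
     (\<forall>a b. (\<Sum>k\<in>UNIV. cnj (U k a) * U k b) = (if a = b then 1 else 0)) \<and>
     (\<forall>a b. (\<Sum>k\<in>UNIV. U a k * cnj (U b k)) = (if a = b then 1 else 0))"

section \<open>Qubit register (C^2)^{2n}; bit False = |0>, True = |1>; qubits indexed 1..2n\<close>

definition bits :: "nat \<Rightarrow> (nat \<Rightarrow> bool) set" where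
  "bits n = {x. \<forall>w. x w \<longrightarrow> w \<in> {1..2*n}}"

definition strings :: "nat \<Rightarrow> (nat \<Rightarrow> bool) set" where
  "strings n = {z \<in> bits n. card {k \<in> {1..2*n}. z k} = n}"

definition emb1 :: "nat \<Rightarrow> bool op \<Rightarrow> (nat \<Rightarrow> bool) op" where
  "emb1 w A = (\<lambda>y x. if (\<forall>v. v \<noteq> w \<longrightarrow> y v = x v) then A (y w) (x w) else 0)"

definition gate2 :: "nat \<Rightarrow> (bool \<times> bool) op \<Rightarrow> (nat \<Rightarrow> bool) op" where
  "gate2 w U = (\<lambda>y x. if (\<forall>v. v \<noteq> w \<and> v \<noteq> Suc w \<longrightarrow> y v = x v)
                       then U (y w, y (Suc w)) (x w, x (Suc w)) else 0)"

definition pX :: "bool op" where "pX = (\<lambda>b a. if b \<noteq> a then 1 else 0)"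
definition pY :: "bool op" where
  "pY = (\<lambda>b a. if b = True \<and> a = False then \<i> else if b = False \<and> a = True then - \<i> else 0)"
definition pZ :: "bool op" where "pZ = (\<lambda>b a. if b = a then (if a then -1 else 1) else 0)"

definition Hxxz :: "nat \<Rightarrow> real \<Rightarrow> (nat \<Rightarrow> bool) op" where
  "Hxxz n lam = (\<lambda>y x.
     (1/4) * complex_of_real (sqrt (1 - lam\<^sup>2)) * (emb1 (2*n) pZ y x - emb1 1 pZ y x)
     - (1/4) * (\<Sum>w\<in>{1..<2*n}.
          (mmul (bits n) (emb1 w pZ) (emb1 (Suc w) pZ) y x - idop y x)
          + complex_of_real lam * (mmul (bits n) (emb1 w pX) (emb1 (Suc w) pX) y x
                                 + mmul (bits n) (emb1 w pY) (emb1 (Suc w) pY) y x)))"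

type_synonym edge = "nat \<times> nat \<times> bool"
type_synonym cfg = "nat \<Rightarrow> edge \<times> bool"   (* line w |-> |e,alpha>_w *)

definition is_edge :: "nat \<Rightarrow> edge \<Rightarrow> bool" where
  "is_edge n e = (case e of (i,j,x) \<Rightarrow>
      i \<le> n \<and> j \<le> n \<and> i + 1 - of_bool x \<le> n \<and> j + of_bool x \<le> n)"

definition eline :: "edge \<Rightarrow> nat" where
  "eline e = (case e of (i,j,x) \<Rightarrow> i + j + 1)"

definition etcoord :: "nat \<Rightarrow> edge \<Rightarrow> nat" where
  "etcoord n e = (case e of (i,j,x) \<Rightarrow> n + j - i + of_bool x)"

definition E :: "nat \<Rightarrow> nat \<Rightarrow> edge set" where
  "E n w = {e. is_edge n e \<and> eline e = w}"

definition cfg_default :: "edge \<times> bool" where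
  "cfg_default = ((0,0,False), False)"

definition cfgs :: "nat \<Rightarrow> cfg set" where
  "cfgs n = {c. (\<forall>w\<in>{1..2*n}. fst (c w) \<in> E n w) \<and> (\<forall>w. w \<notin> {1..2*n} \<longrightarrow> c w = cfg_default)}"

definition nop :: "edge \<Rightarrow> bool \<Rightarrow> cfg op" where
  "nop e a = (\<lambda>c' c. if c' = c \<and> c (eline e) = (e, a) then 1 else 0)"

definition Nop :: "edge \<Rightarrow> cfg op" where
  "Nop e = (\<lambda>c' c. nop e False c' c + nop e True c' c)"

definition trans2 :: "nat \<Rightarrow> edge \<times> bool \<Rightarrow> edge \<times> bool \<Rightarrow> edge \<times> bool \<Rightarrow> edge \<times> bool \<Rightarrow> cfg op" where
  "trans2 w out1 in1 out2 in2 = (\<lambda>c' c.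
     if c w = in1 \<and> c (Suc w) = in2 \<and> c' w = out1 \<and> c' (Suc w) = out2 \<and>
        (\<forall>v. v \<noteq> w \<and> v \<noteq> Suc w \<longrightarrow> c' v = c v) then 1 else 0)"

definition plaqs :: "nat \<Rightarrow> (nat \<times> nat) set" where
  "plaqs n = {0..<n} \<times> {0..<n}"

definition pw :: "nat \<times> nat \<Rightarrow> nat" where "pw p = fst p + snd p + 1"
definition pt :: "nat \<Rightarrow> nat \<times> nat \<Rightarrow> nat" where "pt n p = n + snd p - fst p"

definition pe1 :: "nat \<times> nat \<Rightarrow> edge" where "pe1 p = (fst p, snd p, False)"
definition pe2 :: "nat \<times> nat \<Rightarrow> edge" where "pe2 p = (Suc (fst p), snd p, True)"
definition pe3 :: "nat \<times> nat \<Rightarrow> edge" where "pe3 p = (fst p, snd p, True)"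
definition pe4 :: "nat \<times> nat \<Rightarrow> edge" where "pe4 p = (fst p, Suc (snd p), False)"

definition Hprop :: "(bool \<times> bool) op \<Rightarrow> nat \<times> nat \<Rightarrow> cfg op" where
  "Hprop Up p = (let A = (\<lambda>c' c. - (\<Sum>(\<alpha>,\<beta>,\<gamma>,\<delta>)\<in>(UNIV::(bool\<times>bool\<times>bool\<times>bool) set).
                    Up (\<beta>,\<delta>) (\<alpha>,\<gamma>) *
                    trans2 (pw p) (pe3 p, \<beta>) (pe1 p, \<alpha>) (pe4 p, \<delta>) (pe2 p, \<gamma>) c' c))
                 in (\<lambda>c' c. A c' c + cnj (A c c')))"

definition Hgate :: "nat \<Rightarrow> real \<Rightarrow> (bool \<times> bool) op \<Rightarrow> nat \<times> nat \<Rightarrow> cfg op" where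
  "Hgate n lam Up p = (\<lambda>c' c.
      mmul (cfgs n) (Nop (pe1 p)) (Nop (pe2 p)) c' c
    + mmul (cfgs n) (Nop (pe3 p)) (Nop (pe4 p)) c' c
    + complex_of_real lam * Hprop Up p c' c)"

definition Hinit :: "nat \<Rightarrow> cfg op" where
  "Hinit n = (\<lambda>c' c. Nop (0,0,True) c' c + Nop (n - 1, n, False) c' c)"

definition Hcircuit :: "nat \<Rightarrow> real \<Rightarrow> (nat \<times> nat \<Rightarrow> (bool \<times> bool) op) \<Rightarrow> cfg op" where
  "Hcircuit n lam U = (\<lambda>c' c. (\<Sum>p\<in>plaqs n. Hgate n lam (U p) p c' c)
                              + complex_of_real (sqrt (1 - lam\<^sup>2)) * Hinit n c' c)"

definition vpos :: "(nat \<Rightarrow> bool) \<Rightarrow> nat \<Rightarrow> nat \<times> nat" where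
  "vpos z s = (card {k \<in> {1..s}. \<not> z k}, card {k \<in> {1..s}. z k})"

definition estr :: "(nat \<Rightarrow> bool) \<Rightarrow> nat \<Rightarrow> edge" where
  "estr z s = (fst (vpos z (s - 1)), snd (vpos z (s - 1)), z s)"

definition strcfg :: "nat \<Rightarrow> (nat \<Rightarrow> bool) \<Rightarrow> (nat \<Rightarrow> bool) \<Rightarrow> cfg" where
  "strcfg n x z = (\<lambda>w. if w \<in> {1..2*n} then (estr z w, x w) else cfg_default)"

definition Sstring :: "nat \<Rightarrow> cfg vec set" where
  "Sstring n = {\<psi>. \<exists>a. \<psi> = (\<lambda>c. \<Sum>(x,z)\<in>bits n \<times> strings n. a x z * ket (strcfg n x z) c)}"

definition leftof :: "(nat \<Rightarrow> bool) \<Rightarrow> nat \<times> nat \<Rightarrow> bool" where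
  "leftof z p = (fst p \<ge> fst (vpos z (pw p)))"

text \<open>All plaquettes listed by increasing t_p (ties: disjoint qubit pairs, order irrelevant).\<close>
definition plaq_list :: "nat \<Rightarrow> (nat \<times> nat) list" where
  "plaq_list n = concat (map (\<lambda>t. concat (map (\<lambda>i. map (\<lambda>j. (i,j))
        (filter (\<lambda>j. n + j - i = t) [0..<n])) [0..<n])) [0..<2*n])"

text \<open>V(z): factors earlier in the list act first (are multiplied on the right).\<close>
definition Vz :: "nat \<Rightarrow> (nat \<times> nat \<Rightarrow> (bool \<times> bool) op) \<Rightarrow> (nat \<Rightarrow> bool) \<Rightarrow> (nat \<Rightarrow> bool) op" where
  "Vz n U z = foldl (\<lambda>M p. mmul (bits n) (gate2 (pw p) (U p)) M) idop
                    (filter (leftof z) (plaq_list n))"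

definition rvec :: "nat \<Rightarrow> (nat \<times> nat \<Rightarrow> (bool \<times> bool) op) \<Rightarrow> (nat \<Rightarrow> bool) \<Rightarrow> (nat \<Rightarrow> bool) \<Rightarrow> cfg vec" where
  "rvec n U x z = (\<lambda>c. \<Sum>y\<in>bits n. Vz n U z y x * ket (strcfg n y z) c)"

end

theory Submission
  imports Defs "HOL-Library.FuncSet"
begin


lemma sum_single:
  assumes "finite S" "\<And>x. x \<in> S \<Longrightarrow> x \<noteq> a \<Longrightarrow> f x = 0"
  shows "sum f S = (if a \<in> S then f a else (0::'b::comm_monoid_add))"
proof (cases "a \<in> S")
  case True
  then show ?thesis using assms by (simp add: sum.remove)
next
  case False
  then show ?thesis using assms by (metis (mono_tags) sum.neutral)
qed

lemma bits_eq: "bits n = (\<lambda>A v. v \<in> A) ` Pow {1..2*n}"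
proof
  show "bits n \<subseteq> (\<lambda>A v. v \<in> A) ` Pow {1..2*n}"
  proof
    fix x assume x: "x \<in> bits n"
    have "x = (\<lambda>v. v \<in> {w\<in>{1..2*n}. x w})" using x by (auto simp: bits_def)
    then show "x \<in> (\<lambda>A v. v \<in> A) ` Pow {1..2*n}" by blast
  qed
qed (auto simp: bits_def)

lemma finite_bits[simp]: "finite (bits n)"
  by (simp add: bits_eq)

lemma finite_E: "finite (E n w)"
proof -
  have "E n w \<subseteq> {0..n} \<times> {0..n} \<times> UNIV" by (auto simp: E_def is_edge_def)
  then show ?thesis by (rule finite_subset) auto
qed

lemma finite_cfgs[simp]: "finite (cfgs n)"
proof -
  let ?F = "(\<lambda>f w. if w \<in> {1..2*n} then f w else cfg_default)"
  have "cfgs n \<subseteq> ?F ` (PiE {1..2*n} (\<lambda>w. E n w \<times> UNIV))"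
  proof
    fix c assume c: "c \<in> cfgs n"
    let ?f = "restrict c {1..2*n}"
    have "?f \<in> PiE {1..2*n} (\<lambda>w. E n w \<times> UNIV)" using c by (auto simp: cfgs_def mem_Times_iff)
    moreover have "c = ?F ?f" using c by (auto simp: cfgs_def)
    ultimately show "c \<in> ?F ` (PiE {1..2*n} (\<lambda>w. E n w \<times> UNIV))" by blast
  qed
  moreover have "finite (PiE {1..2*n} (\<lambda>w. E n w \<times> (UNIV::bool set)))"
    by (intro finite_PiE) (auto simp: finite_E)
  ultimately show ?thesis by (meson finite_imageI finite_subset)
qed



lemma vpos_0[simp]: "vpos z 0 = (0,0)"
  by (simp add: vpos_def)

lemma vpos_Suc: "vpos z (Suc s) = (fst (vpos z s) + (if z (Suc s) then 0 else 1),
                                     snd (vpos z s) + (if z (Suc s) then 1 else 0))"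
proof -
  have e: "\<And>P. {k \<in> {1..Suc s}. P k} = {k \<in> {1..s}. P k} \<union> (if P (Suc s) then {Suc s} else {})"
    by (auto simp: le_Suc_eq)
  show ?thesis unfolding vpos_def e by (auto simp: card_insert_if)
qed

lemma vpos_sum: "fst (vpos z s) + snd (vpos z s) = s"
  by (induction s) (auto simp: vpos_Suc)

lemma vpos_agree:
  assumes "vpos z a = vpos z' a" "\<And>k. a < k \<Longrightarrow> k \<le> b \<Longrightarrow> z k = z' k" "a \<le> b"
  shows "vpos z b = vpos z' b"
  using assms(3,2)
proof (induction b rule: dec_induct)
  case base then show ?case using assms(1) by simp
next
  case (step m)
  then show ?case by (simp add: vpos_Suc)
qed

lemma vpos_agree0:
  assumes "\<And>k. 0 < k \<Longrightarrow> k \<le> b \<Longrightarrow> z k = z' k"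
  shows "vpos z b = vpos z' b"
  using vpos_agree[of z 0 z' b] assms by simp

lemma vpos_mono:
  assumes "s \<le> s'"
  shows "fst (vpos z s) \<le> fst (vpos z s')" "snd (vpos z s) \<le> snd (vpos z s')"
  using assms by (induction s' rule: dec_induct) (auto simp: vpos_Suc)

lemma strings_vpos:
  assumes "z \<in> strings n"
  shows "vpos z (2*n) = (n,n)"
proof -
  have "snd (vpos z (2*n)) = n" using assms by (simp add: strings_def vpos_def)
  moreover have "fst (vpos z (2*n)) + snd (vpos z (2*n)) = 2*n" by (rule vpos_sum)
  ultimately show ?thesis by (metis add_right_imp_eq mult_2 prod.collapse)
qed

lemma strings_bits: "z \<in> strings n \<Longrightarrow> z \<in> bits n"
  by (simp add: strings_def)

lemma strings_vpos_le:
  assumes "z \<in> strings n" "s \<le> 2*n"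
  shows "fst (vpos z s) \<le> n" "snd (vpos z s) \<le> n"
  using vpos_mono[OF assms(2), of z] strings_vpos[OF assms(1)] by auto

lemma strings_iff: "z \<in> strings n \<longleftrightarrow> z \<in> bits n \<and> snd (vpos z (2*n)) = n"
  by (simp add: strings_def vpos_def)

definition sw :: "nat \<Rightarrow> (nat \<Rightarrow> bool) \<Rightarrow> nat \<Rightarrow> bool" where
  "sw w z = z(w := z (Suc w), Suc w := z w)"

lemma sw_sw[simp]: "sw w (sw w z) = z"
  by (auto simp: sw_def)

lemma sw_apply: "sw w z w = z (Suc w)" "sw w z (Suc w) = z w"
  "v \<noteq> w \<Longrightarrow> v \<noteq> Suc w \<Longrightarrow> sw w z v = z v"
  by (auto simp: sw_def)

lemma vpos_sw_lt: "s < w \<Longrightarrow> vpos (sw w z) s = vpos z s"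
  by (rule vpos_agree0) (auto simp: sw_def)

lemma vpos_sw_ge:
  assumes "1 \<le> w" "Suc w \<le> s"
  shows "vpos (sw w z) s = vpos z s"
proof -
  obtain k where k: "w = Suc k" using assms by (cases w) auto
  have "vpos (sw w z) k = vpos z k" using k by (simp add: vpos_sw_lt)
  then have "vpos (sw w z) (Suc (Suc k)) = vpos z (Suc (Suc k))"
    using k by (simp add: vpos_Suc sw_apply)
  then show ?thesis
    by (rule vpos_agree) (use assms k in \<open>auto simp: sw_def\<close>)
qed

lemma vpos_sw_ne: "1 \<le> w \<Longrightarrow> s \<noteq> w \<Longrightarrow> vpos (sw w z) s = vpos z s"
  by (cases "s < w") (auto simp: vpos_sw_lt vpos_sw_ge)

lemma sw_bits: "z \<in> bits n \<Longrightarrow> 1 \<le> w \<Longrightarrow> Suc w \<le> 2*n \<Longrightarrow> sw w z \<in> bits n"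
  by (auto simp: bits_def sw_def)

lemma sw_strings: "z \<in> strings n \<Longrightarrow> 1 \<le> w \<Longrightarrow> Suc w \<le> 2*n \<Longrightarrow> sw w z \<in> strings n"
  by (simp add: strings_iff sw_bits vpos_sw_ne)



abbreviation "sc \<equiv> strcfg"

lemma estr_Suc: "estr z (Suc k) = (fst (vpos z k), snd (vpos z k), z (Suc k))"
  by (simp add: estr_def)

lemma strcfg_app: "w \<in> {1..2*n} \<Longrightarrow> strcfg n y z w = (estr z w, y w)"
  by (simp add: strcfg_def)

lemma strcfg_out: "w \<notin> {1..2*n} \<Longrightarrow> strcfg n y z w = cfg_default"
  unfolding strcfg_def by (simp only: if_False)

lemma estr_E:
  assumes "z \<in> strings n" "w \<in> {1..2*n}"
  shows "estr z w \<in> E n w"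
proof -
  obtain k where k: "w = Suc k" using assms(2) by (cases w) auto
  have le: "fst (vpos z (Suc k)) \<le> n" "snd (vpos z (Suc k)) \<le> n"
    "fst (vpos z k) \<le> n" "snd (vpos z k) \<le> n"
    using strings_vpos_le[OF assms(1)] assms(2) k by auto
  have s: "fst (vpos z k) + snd (vpos z k) = k" by (rule vpos_sum)
  show ?thesis using le s unfolding k
    by (auto simp: E_def is_edge_def eline_def estr_Suc vpos_Suc split: if_splits)
qed

lemma strcfg_cfgs: "z \<in> strings n \<Longrightarrow> strcfg n y z \<in> cfgs n"
  unfolding cfgs_def by (auto simp: strcfg_app strcfg_out estr_E simp del: atLeastAtMost_iff)

lemma strcfg_inj:
  assumes "strcfg n y z = strcfg n y' z'" "y \<in> bits n" "y' \<in> bits n" "z \<in> bits n" "z' \<in> bits n"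
  shows "y = y' \<and> z = z'"
proof -
  have "y w = y' w \<and> z w = z' w" for w
  proof (cases "w \<in> {1..2*n}")
    case True
    have "strcfg n y z w = strcfg n y' z' w" using assms(1) by simp
    then show ?thesis using True by (simp add: strcfg_app estr_def)
  next
    case False
    then show ?thesis using assms(2-5) by (auto simp: bits_def)
  qed
  then show ?thesis by auto
qed

lemma strcfg_eq_iff:
  assumes "y \<in> bits n" "y' \<in> bits n" "z \<in> bits n" "z' \<in> bits n"
  shows "strcfg n y z = strcfg n y' z' \<longleftrightarrow> y = y' \<and> z = z'"
  using strcfg_inj[OF _ assms] by auto

lemma strcfg_swap:
  assumes "1 \<le> w" "Suc w \<le> 2*n"
  shows "(strcfg n y z)(w := (estr (sw w z) w, \<beta>), Suc w := (estr (sw w z) (Suc w), \<delta>))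
         = strcfg n (y(w := \<beta>, Suc w := \<delta>)) (sw w z)"
proof
  fix v
  show "((strcfg n y z)(w := (estr (sw w z) w, \<beta>), Suc w := (estr (sw w z) (Suc w), \<delta>))) v
         = strcfg n (y(w := \<beta>, Suc w := \<delta>)) (sw w z) v"
  proof (cases "v = w \<or> v = Suc w")
    case True then show ?thesis using assms by (auto simp: strcfg_def)
  next
    case False
    show ?thesis
    proof (cases "v \<in> {1..2*n}")
      case True
      then obtain k where k: "v = Suc k" by (cases v) auto
      have "k \<noteq> w" using False k by auto
      then have "vpos (sw w z) k = vpos z k" using assms by (simp add: vpos_sw_ne)
      then show ?thesis using True False k by (simp add: strcfg_def estr_Suc sw_apply)
    qed (use False in \<open>auto simp: strcfg_def\<close>)
  qed
qed

lemma Nop_eval: "Nop e c' c = (if c' = c \<and> fst (c (eline e)) = e then 1 else 0)"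
  by (cases "c (eline e)") (auto simp: Nop_def nop_def)

lemma mmul_Nop:
  assumes "finite C"
  shows "mmul C (Nop e1) (Nop e2) c' c =
    (if c' = c \<and> c \<in> C \<and> fst (c (eline e1)) = e1 \<and> fst (c (eline e2)) = e2 then 1 else 0)"
proof -
  have "mmul C (Nop e1) (Nop e2) c' c = (\<Sum>k\<in>C. Nop e1 c' k * Nop e2 k c)" by (simp add: mmul_def)
  also have "\<dots> = (if c \<in> C then Nop e1 c' c * Nop e2 c c else 0)"
    by (rule sum_single[OF assms]) (auto simp: Nop_eval)
  finally show ?thesis by (auto simp: Nop_eval)
qed

lemma trans2_sum:
  "(\<Sum>(\<alpha>,\<beta>,\<gamma>,\<delta>)\<in>(UNIV::(bool\<times>bool\<times>bool\<times>bool) set).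
      g \<alpha> \<beta> \<gamma> \<delta> * trans2 w (e3, \<beta>) (e1, \<alpha>) (e4, \<delta>) (e2, \<gamma>) c' c)
   = (if fst (c w) = e1 \<and> fst (c (Suc w)) = e2 \<and> fst (c' w) = e3 \<and> fst (c' (Suc w)) = e4
         \<and> (\<forall>v. v \<noteq> w \<and> v \<noteq> Suc w \<longrightarrow> c' v = c v)
      then g (snd (c w)) (snd (c' w)) (snd (c (Suc w))) (snd (c' (Suc w))) else 0)"
proof -
  let ?a = "(snd (c w), snd (c' w), snd (c (Suc w)), snd (c' (Suc w)))"
  have "(\<Sum>(\<alpha>,\<beta>,\<gamma>,\<delta>)\<in>(UNIV::(bool\<times>bool\<times>bool\<times>bool) set).
      g \<alpha> \<beta> \<gamma> \<delta> * trans2 w (e3, \<beta>) (e1, \<alpha>) (e4, \<delta>) (e2, \<gamma>) c' c)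
     = (case ?a of (\<alpha>,\<beta>,\<gamma>,\<delta>) \<Rightarrow> g \<alpha> \<beta> \<gamma> \<delta> * trans2 w (e3, \<beta>) (e1, \<alpha>) (e4, \<delta>) (e2, \<gamma>) c' c)"
    by (subst sum_single[where a = ?a]) (auto simp: trans2_def prod_eq_iff split: if_splits)
  then show ?thesis by (auto simp: trans2_def prod_eq_iff)
qed

definition Aval :: "(bool \<times> bool) op \<Rightarrow> nat \<times> nat \<Rightarrow> cfg op" where
  "Aval Up p c' c = (if fst (c (pw p)) = pe1 p \<and> fst (c (Suc (pw p))) = pe2 p
         \<and> fst (c' (pw p)) = pe3 p \<and> fst (c' (Suc (pw p))) = pe4 p
         \<and> (\<forall>v. v \<noteq> pw p \<and> v \<noteq> Suc (pw p) \<longrightarrow> c' v = c v)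
      then - Up (snd (c' (pw p)), snd (c' (Suc (pw p)))) (snd (c (pw p)), snd (c (Suc (pw p)))) else 0)"

lemma Hprop_eval: "Hprop Up p c' c = Aval Up p c' c + cnj (Aval Up p c c')"
proof -
  have "\<And>c' c. (\<Sum>(\<alpha>,\<beta>,\<gamma>,\<delta>)\<in>(UNIV::(bool\<times>bool\<times>bool\<times>bool) set).
                    Up (\<beta>,\<delta>) (\<alpha>,\<gamma>) *
                    trans2 (pw p) (pe3 p, \<beta>) (pe1 p, \<alpha>) (pe4 p, \<delta>) (pe2 p, \<gamma>) c' c)
      = - Aval Up p c' c"
    by (subst trans2_sum) (auto simp add: Aval_def)
  then show ?thesis by (simp add: Hprop_def Let_def)
qed



lemma upd2_iff:
  assumes "w \<noteq> Suc w"
  shows "(\<exists>\<beta> \<delta>. c' = c(w := (e3, \<beta>), Suc w := (e4, \<delta>))) \<longleftrightarrow>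
     (fst (c' w) = e3 \<and> fst (c' (Suc w)) = e4 \<and> (\<forall>v. v \<noteq> w \<and> v \<noteq> Suc w \<longrightarrow> c' v = c v))"
proof
  assume "fst (c' w) = e3 \<and> fst (c' (Suc w)) = e4 \<and> (\<forall>v. v \<noteq> w \<and> v \<noteq> Suc w \<longrightarrow> c' v = c v)"
  then have "c' = c(w := (e3, snd (c' w)), Suc w := (e4, snd (c' (Suc w))))"
    by (auto simp: fun_eq_iff prod_eq_iff)
  then show "\<exists>\<beta> \<delta>. c' = c(w := (e3, \<beta>), Suc w := (e4, \<delta>))" by blast
qed auto

lemma plaq_w:
  assumes "p \<in> plaqs n"
  shows "1 \<le> pw p" "Suc (pw p) \<le> 2*n" "pw p = Suc (fst p + snd p)"
  using assms by (auto simp: plaqs_def pw_def)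

lemma Aval_str1:
  assumes p: "p \<in> plaqs n" and z: "z \<in> strings n"
  shows "Aval Up p c' (strcfg n y z) =
    (if vpos z (pw p - 1) = p \<and> \<not> z (pw p) \<and> z (Suc (pw p)) \<and>
        (\<exists>\<beta> \<delta>. c' = strcfg n (y(pw p := \<beta>, Suc (pw p) := \<delta>)) (sw (pw p) z))
     then - Up (snd (c' (pw p)), snd (c' (Suc (pw p)))) (y (pw p), y (Suc (pw p))) else 0)"
proof -
  let ?w = "pw p" and ?c = "strcfg n y z"
  obtain k where k: "?w = Suc k" "k = fst p + snd p" using plaq_w[OF p] by auto
  have r: "?w \<in> {1..2*n}" "Suc ?w \<in> {1..2*n}" using plaq_w[OF p] by auto
  have c1: "?c ?w = (estr z ?w, y ?w)" "?c (Suc ?w) = (estr z (Suc ?w), y (Suc ?w))"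
    using r by (auto simp: strcfg_app simp del: atLeastAtMost_iff)
  have P: "(fst (?c ?w) = pe1 p \<and> fst (?c (Suc ?w)) = pe2 p) \<longleftrightarrow>
           (vpos z k = p \<and> \<not> z ?w \<and> z (Suc ?w))"
    unfolding c1 unfolding k(1) estr_Suc
    by (cases p; cases "vpos z k"; simp add: pe1_def pe2_def vpos_Suc; blast)
  show ?thesis
  proof (cases "vpos z k = p \<and> \<not> z ?w \<and> z (Suc ?w)")
    case True
    have e3: "estr (sw ?w z) ?w = pe3 p" using True k
      by (simp add: estr_Suc sw_apply pe3_def vpos_sw_lt)
    have e4: "estr (sw ?w z) (Suc ?w) = pe4 p" using True k
      by (simp add: estr_Suc sw_apply pe4_def vpos_sw_lt vpos_Suc)
    have "(\<exists>\<beta> \<delta>. c' = strcfg n (y(?w := \<beta>, Suc ?w := \<delta>)) (sw ?w z)) \<longleftrightarrow>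
          (\<exists>\<beta> \<delta>. c' = ?c(?w := (pe3 p, \<beta>), Suc ?w := (pe4 p, \<delta>)))"
      using strcfg_swap[of ?w n y z] plaq_w[OF p] e3 e4 by auto
    also have "\<dots> \<longleftrightarrow> (fst (c' ?w) = pe3 p \<and> fst (c' (Suc ?w)) = pe4 p \<and>
        (\<forall>v. v \<noteq> ?w \<and> v \<noteq> Suc ?w \<longrightarrow> c' v = ?c v))" by (rule upd2_iff) simp
    finally have F: "(\<exists>\<beta> \<delta>. c' = strcfg n (y(?w := \<beta>, Suc ?w := \<delta>)) (sw ?w z)) \<longleftrightarrow> (fst (c' ?w) = pe3 p \<and> fst (c' (Suc ?w)) = pe4 p \<and>
        (\<forall>v. v \<noteq> ?w \<and> v \<noteq> Suc ?w \<longrightarrow> c' v = ?c v))" .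
    have L: "fst (?c ?w) = pe1 p \<and> fst (?c (Suc ?w)) = pe2 p" using P True by simp
    have km: "pw p - 1 = k" using k by simp
    have snd1: "snd (?c ?w) = y ?w" "snd (?c (Suc ?w)) = y (Suc ?w)" using c1 by simp_all
    have C1: "vpos z (pw p - 1) = p \<and> \<not> z ?w \<and> z (Suc ?w)" using True km by simp
    show ?thesis unfolding Aval_def snd1 by (simp only: L C1 F simp_thms)
  next
    case False
        have km: "pw p - 1 = k" using k by simp
    have L: "\<not> (fst (?c ?w) = pe1 p \<and> fst (?c (Suc ?w)) = pe2 p)" using P False by simp
    have c1f: "\<not> (vpos z (pw p - 1) = p \<and> \<not> z ?w \<and> z (Suc ?w) \<and> (\<exists>\<beta> \<delta>. c' = strcfg n (y(?w := \<beta>, Suc ?w := \<delta>)) (sw ?w z)))" using False km by auto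
    have c2f: "\<not> (fst (?c ?w) = pe1 p \<and> fst (?c (Suc ?w)) = pe2 p \<and> fst (c' ?w) = pe3 p \<and> fst (c' (Suc ?w)) = pe4 p \<and> (\<forall>v. v \<noteq> ?w \<and> v \<noteq> Suc ?w \<longrightarrow> c' v = ?c v))" using L by blast
    show ?thesis unfolding Aval_def by (simp only: c1f c2f if_False)
  qed
qed

lemma Aval_str2:
  assumes p: "p \<in> plaqs n" and z: "z \<in> strings n"
  shows "Aval Up p (strcfg n y z) c' =
    (if vpos z (pw p - 1) = p \<and> z (pw p) \<and> \<not> z (Suc (pw p)) \<and>
        (\<exists>\<beta> \<delta>. c' = strcfg n (y(pw p := \<beta>, Suc (pw p) := \<delta>)) (sw (pw p) z))
     then - Up (y (pw p), y (Suc (pw p))) (snd (c' (pw p)), snd (c' (Suc (pw p)))) else 0)"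
proof -
  let ?w = "pw p" and ?c = "strcfg n y z"
  obtain k where k: "?w = Suc k" "k = fst p + snd p" using plaq_w[OF p] by auto
  have r: "?w \<in> {1..2*n}" "Suc ?w \<in> {1..2*n}" using plaq_w[OF p] by auto
  have c1: "?c ?w = (estr z ?w, y ?w)" "?c (Suc ?w) = (estr z (Suc ?w), y (Suc ?w))"
    using r by (auto simp: strcfg_app simp del: atLeastAtMost_iff)
  have P: "(fst (?c ?w) = pe3 p \<and> fst (?c (Suc ?w)) = pe4 p) \<longleftrightarrow>
           (vpos z k = p \<and> z ?w \<and> \<not> z (Suc ?w))"
    unfolding c1 unfolding k(1) estr_Suc
    by (cases p; cases "vpos z k"; simp add: pe3_def pe4_def vpos_Suc; blast)
  show ?thesis
  proof (cases "vpos z k = p \<and> z ?w \<and> \<not> z (Suc ?w)")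
    case True
    have e3: "estr (sw ?w z) ?w = pe1 p" using True k
      by (simp add: estr_Suc sw_apply pe1_def vpos_sw_lt)
    have e4: "estr (sw ?w z) (Suc ?w) = pe2 p" using True k
      by (simp add: estr_Suc sw_apply pe2_def vpos_sw_lt vpos_Suc)
    have "(\<exists>\<beta> \<delta>. c' = strcfg n (y(?w := \<beta>, Suc ?w := \<delta>)) (sw ?w z)) \<longleftrightarrow>
          (\<exists>\<beta> \<delta>. c' = ?c(?w := (pe1 p, \<beta>), Suc ?w := (pe2 p, \<delta>)))"
      using strcfg_swap[of ?w n y z] plaq_w[OF p] e3 e4 by auto
    also have "\<dots> \<longleftrightarrow> (fst (c' ?w) = pe1 p \<and> fst (c' (Suc ?w)) = pe2 p \<and>
        (\<forall>v. v \<noteq> ?w \<and> v \<noteq> Suc ?w \<longrightarrow> c' v = ?c v))" by (rule upd2_iff) simp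
    finally have F: "(\<exists>\<beta> \<delta>. c' = strcfg n (y(?w := \<beta>, Suc ?w := \<delta>)) (sw ?w z)) \<longleftrightarrow> (fst (c' ?w) = pe1 p \<and> fst (c' (Suc ?w)) = pe2 p \<and>
        (\<forall>v. v \<noteq> ?w \<and> v \<noteq> Suc ?w \<longrightarrow> c' v = ?c v))" .
    have L: "fst (?c ?w) = pe3 p \<and> fst (?c (Suc ?w)) = pe4 p" using P True by simp
    have km: "pw p - 1 = k" using k by simp
    have snd1: "snd (?c ?w) = y ?w" "snd (?c (Suc ?w)) = y (Suc ?w)" using c1 by simp_all
    have C1: "vpos z (pw p - 1) = p \<and> z ?w \<and> \<not> z (Suc ?w)" using True km by simp
    show ?thesis unfolding Aval_def snd1 by (simp only: L C1 F simp_thms) (rule if_cong; auto)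
  next
    case False
        have km: "pw p - 1 = k" using k by simp
    have L: "\<not> (fst (?c ?w) = pe3 p \<and> fst (?c (Suc ?w)) = pe4 p)" using P False by simp
    have c1f: "\<not> (vpos z (pw p - 1) = p \<and> z ?w \<and> \<not> z (Suc ?w) \<and> (\<exists>\<beta> \<delta>. c' = strcfg n (y(?w := \<beta>, Suc ?w := \<delta>)) (sw ?w z)))" using False km by auto
    have c2f: "\<not> (fst (c' ?w) = pe1 p \<and> fst (c' (Suc ?w)) = pe2 p \<and> fst (?c ?w) = pe3 p \<and> fst (?c (Suc ?w)) = pe4 p \<and> (\<forall>v. v \<noteq> ?w \<and> v \<noteq> Suc ?w \<longrightarrow> ?c v = c' v))" using L by blast
    show ?thesis unfolding Aval_def by (simp only: c1f c2f if_False)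
  qed
qed



lemma P01_iff:
  assumes p: "p \<in> plaqs n"
  shows "(fst (strcfg n y z (pw p)) = pe1 p \<and> fst (strcfg n y z (Suc (pw p))) = pe2 p) \<longleftrightarrow>
         (vpos z (pw p - 1) = p \<and> \<not> z (pw p) \<and> z (Suc (pw p)))"
    and "(fst (strcfg n y z (pw p)) = pe3 p \<and> fst (strcfg n y z (Suc (pw p))) = pe4 p) \<longleftrightarrow>
         (vpos z (pw p - 1) = p \<and> z (pw p) \<and> \<not> z (Suc (pw p)))"
proof -
  let ?w = "pw p" and ?c = "strcfg n y z"
  obtain k where k: "?w = Suc k" using plaq_w[OF p] by auto
  have r: "?w \<in> {1..2*n}" "Suc ?w \<in> {1..2*n}" using plaq_w[OF p] by auto
  have c1: "?c ?w = (estr z ?w, y ?w)" "?c (Suc ?w) = (estr z (Suc ?w), y (Suc ?w))"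
    using r by (auto simp: strcfg_app simp del: atLeastAtMost_iff)
  have km: "pw p - 1 = k" using k by simp
  show "(fst (?c ?w) = pe1 p \<and> fst (?c (Suc ?w)) = pe2 p) \<longleftrightarrow>
         (vpos z (pw p - 1) = p \<and> \<not> z ?w \<and> z (Suc ?w))"
    unfolding c1 km unfolding k estr_Suc
    by (cases p; cases "vpos z k"; simp add: pe1_def pe2_def vpos_Suc; blast)
  show "(fst (?c ?w) = pe3 p \<and> fst (?c (Suc ?w)) = pe4 p) \<longleftrightarrow>
         (vpos z (pw p - 1) = p \<and> z ?w \<and> \<not> z (Suc ?w))"
    unfolding c1 km unfolding k estr_Suc
    by (cases p; cases "vpos z k"; simp add: pe3_def pe4_def vpos_Suc; blast)
qed

lemma eline_pe: "eline (pe1 p) = pw p" "eline (pe2 p) = Suc (pw p)"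
  "eline (pe3 p) = pw p" "eline (pe4 p) = Suc (pw p)"
  by (auto simp: eline_def pe1_def pe2_def pe3_def pe4_def pw_def)

definition hop :: "nat \<Rightarrow> (nat \<times> nat \<Rightarrow> (bool \<times> bool) op) \<Rightarrow> (nat \<Rightarrow> bool) \<Rightarrow> (nat \<Rightarrow> bool) \<Rightarrow> nat \<Rightarrow> cfg \<Rightarrow> complex" where
  "hop n U y z w c' = (if (\<exists>\<beta> \<delta>. c' = strcfg n (y(w := \<beta>, Suc w := \<delta>)) (sw w z))
     then (if z w then - cnj (U (vpos z (w - 1)) (y w, y (Suc w)) (snd (c' w), snd (c' (Suc w))))
           else - U (vpos z (w - 1)) (snd (c' w), snd (c' (Suc w))) (y w, y (Suc w)))
     else 0)"

lemma Hgate_str: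
  assumes p: "p \<in> plaqs n" and z: "z \<in> strings n"
  shows "Hgate n lam (U p) p c' (strcfg n y z) =
    (if vpos z (pw p - 1) = p \<and> z (pw p) \<noteq> z (Suc (pw p))
     then (if c' = strcfg n y z then 1 else 0) + complex_of_real lam * hop n U y z (pw p) c' else 0)"
proof -
  have inC: "strcfg n y z \<in> cfgs n" using z by (rule strcfg_cfgs)
  show ?thesis
    unfolding Hgate_def Hprop_eval Aval_str1[OF p z] Aval_str2[OF p z]
      mmul_Nop[OF finite_cfgs] eline_pe
    using P01_iff[OF p, of y z] inC
    by (cases "vpos z (pw p - 1) = p"; cases "z (pw p)"; cases "z (Suc (pw p))";
        auto simp: hop_def)
qed



lemma vpos_two:
  assumes "z w \<noteq> z (Suc w)" "1 \<le> w"
  shows "fst (vpos z (Suc w)) = Suc (fst (vpos z (w - 1)))"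
        "snd (vpos z (Suc w)) = Suc (snd (vpos z (w - 1)))"
proof -
  obtain k where k: "w = Suc k" using assms(2) by (cases w) auto
  show "fst (vpos z (Suc w)) = Suc (fst (vpos z (w - 1)))"
       "snd (vpos z (Suc w)) = Suc (snd (vpos z (w - 1)))"
    using assms(1) unfolding k by (auto simp: vpos_Suc)
qed

lemma reindex:
  assumes z: "z \<in> strings n"
  shows "(\<Sum>p\<in>plaqs n. if vpos z (pw p - 1) = p \<and> z (pw p) \<noteq> z (Suc (pw p)) then h p else 0)
       = (\<Sum>w\<in>{1..<2*n}. if z w \<noteq> z (Suc w) then h (vpos z (w - 1)) else (0::'a::comm_monoid_add))"
proof -
  let ?P = "{p\<in>plaqs n. vpos z (pw p - 1) = p \<and> z (pw p) \<noteq> z (Suc (pw p))}"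
  let ?W = "{w\<in>{1..<2*n}. z w \<noteq> z (Suc w)}"
  have fp: "finite (plaqs n)" by (simp add: plaqs_def)
  have L: "(\<Sum>p\<in>plaqs n. if vpos z (pw p - 1) = p \<and> z (pw p) \<noteq> z (Suc (pw p)) then h p else 0)
     = (\<Sum>p\<in>?P. h p)" by (rule sum.inter_filter[symmetric, OF fp])
  have R: "(\<Sum>w\<in>{1..<2*n}. if z w \<noteq> z (Suc w) then h (vpos z (w - 1)) else 0)
     = (\<Sum>w\<in>?W. h (vpos z (w - 1)))" by (rule sum.inter_filter[symmetric]) simp
  have pwv: "pw (vpos z (w - 1)) = w" if "1 \<le> w" for w
    using vpos_sum[of z "w - 1"] that by (simp add: pw_def)
  have bij: "bij_betw pw ?P ?W"
  proof (rule bij_betw_imageI)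
    show "inj_on pw ?P" by (rule inj_onI) auto
    show "pw ` ?P = ?W"
    proof
      show "pw ` ?P \<subseteq> ?W" using plaq_w by fastforce
      show "?W \<subseteq> pw ` ?P"
      proof
        fix w assume w: "w \<in> ?W"
        let ?p = "vpos z (w - 1)"
        have le: "fst (vpos z (Suc w)) \<le> n" "snd (vpos z (Suc w)) \<le> n"
          using strings_vpos_le[OF z, of "Suc w"] w by auto
        have "?p \<in> plaqs n" using vpos_two[of z w] w le by (auto simp: plaqs_def mem_Times_iff)
        moreover have "pw ?p = w" using w pwv by auto
        ultimately show "w \<in> pw ` ?P" using w by (auto intro!: image_eqI[where x = ?p])
      qed
    qed
  qed
  have "(\<Sum>p\<in>?P. h p) = (\<Sum>p\<in>?P. h (vpos z (pw p - 1)))" by (rule sum.cong) auto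
  also have "\<dots> = (\<Sum>w\<in>?W. h (vpos z (w - 1)))"
    by (rule sum.reindex_bij_betw[OF bij, where g = "\<lambda>w. h (vpos z (w - 1))"])
  finally show ?thesis using L R by simp
qed

lemma Hinit_str:
  assumes n: "n \<ge> 1" and z: "z \<in> strings n"
  shows "Hinit n c' (strcfg n y z) = (if c' = strcfg n y z then
           (if z 1 then 1 else 0) + (if z (2*n) then 0 else 1) else 0)"
proof -
  have r1: "(1::nat) \<in> {1..2*n}" "2*n \<in> {1..2*n}" using n by auto
  have e1: "eline (0::nat, 0::nat, True) = 1" by (simp add: eline_def)
  have e2: "eline (n - 1, n, False) = 2*n" using n by (simp add: eline_def)
  have a: "fst (strcfg n y z 1) = (0,0,True) \<longleftrightarrow> z 1"
    using r1 by (simp add: strcfg_app estr_def vpos_def)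
  obtain m where m: "2*n = Suc m" using n by (cases "2*n") auto
  have vm: "vpos z (Suc m) = (n,n)" using strings_vpos[OF z] m by simp
  have b: "fst (strcfg n y z (2*n)) = (n - 1, n, False) \<longleftrightarrow> \<not> z (2*n)"
  proof -
    have "fst (strcfg n y z (2*n)) = estr z (Suc m)" using r1 m by (simp add: strcfg_app)
    then show ?thesis using vm m n unfolding estr_Suc by (auto simp: vpos_Suc split: if_splits)
  qed
  show ?thesis unfolding Hinit_def Nop_eval e1 e2 a b by auto
qed

definition Dc :: "nat \<Rightarrow> real \<Rightarrow> (nat \<Rightarrow> bool) \<Rightarrow> complex" where
  "Dc n lam z = (\<Sum>w\<in>{1..<2*n}. if z w \<noteq> z (Suc w) then 1 else 0)
      + complex_of_real (sqrt (1 - lam\<^sup>2)) * ((if z 1 then 1 else 0) + (if z (2*n) then 0 else 1))"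

lemma Hcircuit_col:
  assumes n: "n \<ge> 1" and z: "z \<in> strings n"
  shows "Hcircuit n lam U c' (strcfg n y z) =
    (if c' = strcfg n y z then Dc n lam z else 0)
    + complex_of_real lam * (\<Sum>w\<in>{1..<2*n}. if z w \<noteq> z (Suc w) then hop n U y z w c' else 0)"
proof -
  let ?c = "strcfg n y z"
  let ?d = "\<lambda>w. z w \<noteq> z (Suc w)"
  have pwv: "pw (vpos z (w - 1)) = w" if "1 \<le> w" for w
    using vpos_sum[of z "w - 1"] that by (simp add: pw_def)
  have "(\<Sum>p\<in>plaqs n. Hgate n lam (U p) p c' ?c)
     = (\<Sum>p\<in>plaqs n. if vpos z (pw p - 1) = p \<and> z (pw p) \<noteq> z (Suc (pw p))
         then (if c' = ?c then 1 else 0) + complex_of_real lam * hop n U y z (pw p) c' else 0)"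
    by (rule sum.cong) (auto simp: Hgate_str z)
  also have "\<dots> = (\<Sum>w\<in>{1..<2*n}. if ?d w then
      (if c' = ?c then 1 else 0) + complex_of_real lam * hop n U y z (pw (vpos z (w - 1))) c' else 0)"
    by (rule reindex[OF z])
  also have "\<dots> = (\<Sum>w\<in>{1..<2*n}. (if c' = ?c then (if ?d w then 1 else 0) else 0)
       + complex_of_real lam * (if ?d w then hop n U y z w c' else 0))"
  proof (rule sum.cong)
    fix w assume "w \<in> {1..<2*n}"
    then have "pw (vpos z (w - 1)) = w" using pwv by auto
    then show "(if ?d w then
      (if c' = ?c then 1 else 0) + complex_of_real lam * hop n U y z (pw (vpos z (w - 1))) c' else 0)
       = (if c' = ?c then (if ?d w then 1 else 0) else 0)
       + complex_of_real lam * (if ?d w then hop n U y z w c' else 0)" by auto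
  qed simp
  also have "\<dots> = (if c' = ?c then (\<Sum>w\<in>{1..<2*n}. if ?d w then 1 else 0) else 0)
       + complex_of_real lam * (\<Sum>w\<in>{1..<2*n}. if ?d w then hop n U y z w c' else 0)"
    by (simp add: sum.distrib sum_distrib_left)
  finally have G: "(\<Sum>p\<in>plaqs n. Hgate n lam (U p) p c' ?c) = \<dots>" .
  show ?thesis unfolding Hcircuit_def G Hinit_str[OF n z] Dc_def
    by (auto simp: algebra_simps)
qed



lemma emb1_mmul:
  assumes "x \<in> bits n" "y \<in> bits n"
  shows "mmul (bits n) (emb1 w A) (emb1 (Suc w) A') y x =
    (if (\<forall>v. v \<noteq> w \<and> v \<noteq> Suc w \<longrightarrow> y v = x v) then A (y w) (x w) * A' (y (Suc w)) (x (Suc w)) else 0)"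
proof -
  let ?a = "y(w := x w)"
  have a: "?a \<in> bits n" using assms by (auto simp: bits_def)
  have "mmul (bits n) (emb1 w A) (emb1 (Suc w) A') y x = (\<Sum>k\<in>bits n. emb1 w A y k * emb1 (Suc w) A' k x)"
    by (simp add: mmul_def)
  also have "\<dots> = emb1 w A y ?a * emb1 (Suc w) A' ?a x"
  proof (subst sum_single[where a = ?a])
    show "finite (bits n)" by simp
    fix k assume "k \<in> bits n" "k \<noteq> ?a"
    moreover have "k = ?a" if "\<forall>v. v \<noteq> w \<longrightarrow> y v = k v" "\<forall>v. v \<noteq> Suc w \<longrightarrow> k v = x v"
    proof
      fix v show "k v = ?a v" using that by (cases "v = w") auto
    qed
    ultimately have "\<not> (\<forall>v. v \<noteq> w \<longrightarrow> y v = k v) \<or> \<not> (\<forall>v. v \<noteq> Suc w \<longrightarrow> k v = x v)" by blast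
    then show "emb1 w A y k * emb1 (Suc w) A' k x = 0" unfolding emb1_def by auto
  qed (simp add: a)
  also have "\<dots> = (if (\<forall>v. v \<noteq> w \<and> v \<noteq> Suc w \<longrightarrow> y v = x v) then A (y w) (x w) * A' (y (Suc w)) (x (Suc w)) else 0)"
    by (simp add: emb1_def, blast)
  finally show ?thesis .
qed

definition zv :: "bool \<Rightarrow> complex" where "zv b = (if b then -1 else 1)"

lemma emb1_Z: "emb1 w pZ z' z = (if z' = z then zv (z w) else 0)"
  by (auto simp: emb1_def pZ_def zv_def fun_eq_iff)

lemma ZZ_eval:
  assumes "z \<in> bits n" "z' \<in> bits n"
  shows "mmul (bits n) (emb1 w pZ) (emb1 (Suc w) pZ) z' z = (if z' = z then zv (z w) * zv (z (Suc w)) else 0)"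
  unfolding emb1_mmul[OF assms] by (auto simp: pZ_def zv_def fun_eq_iff)

lemma sw_eq_iff: "z' = sw w z \<longleftrightarrow> (\<forall>v. v \<noteq> w \<and> v \<noteq> Suc w \<longrightarrow> z' v = z v) \<and> z' w = z (Suc w) \<and> z' (Suc w) = z w"
proof
  assume "z' = sw w z" then show "(\<forall>v. v \<noteq> w \<and> v \<noteq> Suc w \<longrightarrow> z' v = z v) \<and> z' w = z (Suc w) \<and> z' (Suc w) = z w"
    by (simp add: sw_apply)
next
  assume H: "(\<forall>v. v \<noteq> w \<and> v \<noteq> Suc w \<longrightarrow> z' v = z v) \<and> z' w = z (Suc w) \<and> z' (Suc w) = z w"
  show "z' = sw w z"
  proof
    fix v show "z' v = sw w z v" using H by (cases "v = w"; cases "v = Suc w"; simp add: sw_apply)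
  qed
qed

lemma XY_eval:
  assumes "z \<in> bits n" "z' \<in> bits n"
  shows "mmul (bits n) (emb1 w pX) (emb1 (Suc w) pX) z' z + mmul (bits n) (emb1 w pY) (emb1 (Suc w) pY) z' z
     = (if z w \<noteq> z (Suc w) \<and> z' = sw w z then 2 else 0)"
  unfolding emb1_mmul[OF assms] sw_eq_iff
  by (cases "z w"; cases "z (Suc w)"; cases "z' w"; cases "z' (Suc w)"; auto simp: pX_def pY_def)

definition Dx :: "nat \<Rightarrow> real \<Rightarrow> (nat \<Rightarrow> bool) \<Rightarrow> complex" where
  "Dx n lam z = (\<Sum>w\<in>{1..<2*n}. if z w \<noteq> z (Suc w) then 1 else 0)
      + complex_of_real (sqrt (1 - lam\<^sup>2)) * ((if z 1 then 1 else 0) + (if z (2*n) then 0 else 1) - 1)"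

lemma Hxxz_eval:
  assumes "z \<in> bits n" "z' \<in> bits n"
  shows "2 * Hxxz n lam z' z = (if z' = z then Dx n lam z else 0)
     - complex_of_real lam * (\<Sum>w\<in>{1..<2*n}. if z w \<noteq> z (Suc w) \<and> z' = sw w z then 1 else 0)"
proof -
  let ?d = "\<lambda>w. z w \<noteq> z (Suc w)"
  let ?s = "complex_of_real (sqrt (1 - lam\<^sup>2))"
  have per: "(mmul (bits n) (emb1 w pZ) (emb1 (Suc w) pZ) z' z - idop z' z)
          + complex_of_real lam * (mmul (bits n) (emb1 w pX) (emb1 (Suc w) pX) z' z
                                 + mmul (bits n) (emb1 w pY) (emb1 (Suc w) pY) z' z)
        = (if z' = z then -2 * (if ?d w then 1 else 0) else 0)
          + 2 * complex_of_real lam * (if ?d w \<and> z' = sw w z then 1 else 0)" for w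
    unfolding ZZ_eval[OF assms] XY_eval[OF assms] by (auto simp: idop_def zv_def)
  have S: "(\<Sum>w\<in>{1..<2*n}. (mmul (bits n) (emb1 w pZ) (emb1 (Suc w) pZ) z' z - idop z' z)
          + complex_of_real lam * (mmul (bits n) (emb1 w pX) (emb1 (Suc w) pX) z' z
                                 + mmul (bits n) (emb1 w pY) (emb1 (Suc w) pY) z' z))
     = (if z' = z then -2 * (\<Sum>w\<in>{1..<2*n}. if ?d w then 1 else 0) else 0)
       + 2 * complex_of_real lam * (\<Sum>w\<in>{1..<2*n}. if ?d w \<and> z' = sw w z then 1 else 0)"
    unfolding per by (simp add: sum.distrib sum_distrib_left)
  have H: "Hxxz n lam z' z = (1/4) * ?s * (emb1 (2*n) pZ z' z - emb1 1 pZ z' z) - (1/4) *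
     (\<Sum>w\<in>{1..<2*n}. (mmul (bits n) (emb1 w pZ) (emb1 (Suc w) pZ) z' z - idop z' z)
          + complex_of_real lam * (mmul (bits n) (emb1 w pX) (emb1 (Suc w) pX) z' z
                                 + mmul (bits n) (emb1 w pY) (emb1 (Suc w) pY) z' z))"
    by (simp add: Hxxz_def)
  show ?thesis unfolding H S emb1_Z Dx_def
    by (cases "z 1"; cases "z (2*n)"; auto simp: zv_def algebra_simps)
qed



definition unitB :: "nat \<Rightarrow> (nat \<Rightarrow> bool) op \<Rightarrow> bool" where
  "unitB n M \<longleftrightarrow> (\<forall>x\<in>bits n. \<forall>x'\<in>bits n. (\<Sum>y\<in>bits n. cnj (M y x') * M y x) = (if x' = x then 1 else 0))"

definition eqB :: "nat \<Rightarrow> (nat \<Rightarrow> bool) op \<Rightarrow> (nat \<Rightarrow> bool) op \<Rightarrow> bool" where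
  "eqB n M N \<longleftrightarrow> (\<forall>y\<in>bits n. \<forall>x\<in>bits n. M y x = N y x)"

lemma eqB_sym: "eqB n M N \<Longrightarrow> eqB n N M" by (auto simp: eqB_def)
lemma eqB_trans: "eqB n M N \<Longrightarrow> eqB n N P \<Longrightarrow> eqB n M P" by (auto simp: eqB_def)
lemma eqB_refl: "eqB n M M" by (auto simp: eqB_def)

lemma unit_idop: "unitB n idop"
  unfolding unitB_def
proof (intro ballI)
  fix x x' assume x: "x \<in> bits n" "x' \<in> bits n"
  show "(\<Sum>y\<in>bits n. cnj (idop y x') * idop y x) = (if x' = x then 1 else 0)"
    by (subst sum_single[where a = x]) (auto simp: idop_def x)
qed

lemma unit_eqB: "eqB n M N \<Longrightarrow> unitB n M \<Longrightarrow> unitB n N"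
  unfolding unitB_def eqB_def by simp

lemma mmul_assoc: "finite B \<Longrightarrow> mmul B (mmul B A M) N = mmul B A (mmul B M N)"
  unfolding mmul_def
  by (auto simp: fun_eq_iff sum_distrib_left sum_distrib_right mult.assoc intro: sum.swap)

lemma eqB_mmul_right: "eqB n M N \<Longrightarrow> eqB n (mmul (bits n) A M) (mmul (bits n) A N)"
  unfolding eqB_def mmul_def by simp

lemma eqB_mmul_left: "eqB n A A' \<Longrightarrow> eqB n (mmul (bits n) A M) (mmul (bits n) A' M)"
  unfolding eqB_def mmul_def by simp

lemma unit_mmul:
  assumes G: "unitB n G" and M: "unitB n M"
  shows "unitB n (mmul (bits n) G M)"
  unfolding unitB_def
proof (intro ballI)
  fix x x' assume x: "x \<in> bits n" "x' \<in> bits n"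
  let ?B = "bits n"
  have "(\<Sum>y\<in>?B. cnj (mmul ?B G M y x') * mmul ?B G M y x)
      = (\<Sum>y\<in>?B. \<Sum>k\<in>?B. \<Sum>l\<in>?B. cnj (M k x') * M l x * (cnj (G y k) * G y l))"
    unfolding mmul_def
  proof (intro sum.cong refl)
    fix y show "cnj (\<Sum>z\<in>?B. G y z * M z x') * (\<Sum>z\<in>?B. G y z * M z x) =
      (\<Sum>k\<in>?B. \<Sum>l\<in>?B. cnj (M k x') * M l x * (cnj (G y k) * G y l))"
      by (simp add: sum_product mult_ac) (rule sum.swap)
  qed
  also have "\<dots> = (\<Sum>k\<in>?B. \<Sum>l\<in>?B. \<Sum>y\<in>?B. cnj (M k x') * M l x * (cnj (G y k) * G y l))"
  proof -
    have "(\<Sum>y\<in>?B. \<Sum>k\<in>?B. \<Sum>l\<in>?B. cnj (M k x') * M l x * (cnj (G y k) * G y l))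
      = (\<Sum>k\<in>?B. \<Sum>y\<in>?B. \<Sum>l\<in>?B. cnj (M k x') * M l x * (cnj (G y k) * G y l))"
      by (rule sum.swap)
    also have "\<dots> = (\<Sum>k\<in>?B. \<Sum>l\<in>?B. \<Sum>y\<in>?B. cnj (M k x') * M l x * (cnj (G y k) * G y l))"
      by (rule sum.cong[OF refl]) (rule sum.swap)
    finally show ?thesis .
  qed
  also have "\<dots> = (\<Sum>k\<in>?B. \<Sum>l\<in>?B. cnj (M k x') * M l x * (if k = l then 1 else 0))"
  proof (intro sum.cong refl)
    fix k l assume "k \<in> ?B" "l \<in> ?B"
    then show "(\<Sum>y\<in>?B. cnj (M k x') * M l x * (cnj (G y k) * G y l)) = cnj (M k x') * M l x * (if k = l then 1 else 0)"
      using G unfolding unitB_def by (simp add: sum_distrib_left[symmetric])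
  qed
  also have "\<dots> = (\<Sum>k\<in>?B. cnj (M k x') * M k x)"
  proof (intro sum.cong refl)
    fix k assume k: "k \<in> ?B"
    show "(\<Sum>l\<in>?B. cnj (M k x') * M l x * (if k = l then 1 else 0)) = cnj (M k x') * M k x"
      by (subst sum_single[where a = k]) (auto simp: k)
  qed
  also have "\<dots> = (if x' = x then 1 else 0)" using M x unfolding unitB_def by simp
  finally show "(\<Sum>y\<in>?B. cnj (mmul ?B G M y x') * mmul ?B G M y x) = (if x' = x then 1 else 0)" .
qed



lemma gate2_unit:
  assumes U: "unitary2 Uq" and w: "1 \<le> w" "Suc w \<le> 2*n"
  shows "unitB n (gate2 w Uq)"
  unfolding unitB_def
proof (intro ballI)
  fix x x' assume x: "x \<in> bits n" "x' \<in> bits n"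
  let ?B = "bits n" and ?G = "gate2 w Uq"
  let ?f = "\<lambda>(a::bool, b::bool). x(w := a, Suc w := b)"
  let ?h = "\<lambda>y. cnj (?G y x') * ?G y x"
  have fB: "?f ` UNIV \<subseteq> ?B" using x w by (auto simp: bits_def split: if_splits)
  have inj: "inj ?f"
  proof (rule injI)
    fix k l assume "?f k = ?f l"
    then have "?f k w = ?f l w" "?f k (Suc w) = ?f l (Suc w)" by auto
    then show "k = l" by (cases k; cases l) auto
  qed
  have "(\<Sum>y\<in>?B. ?h y) = (\<Sum>y\<in>?f ` UNIV. ?h y)"
  proof (rule sum.mono_neutral_right)
    show "\<forall>y\<in>?B - ?f ` UNIV. ?h y = 0"
    proof
      fix y assume y: "y \<in> ?B - ?f ` UNIV"
      have "\<not> (\<forall>v. v \<noteq> w \<and> v \<noteq> Suc w \<longrightarrow> y v = x v)"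
      proof
        assume a: "\<forall>v. v \<noteq> w \<and> v \<noteq> Suc w \<longrightarrow> y v = x v"
        have "y = ?f (y w, y (Suc w))"
        proof
          fix v show "y v = ?f (y w, y (Suc w)) v" using a by (cases "v = w"; cases "v = Suc w") auto
        qed
        then show False using y by blast
      qed
      then show "?h y = 0" by (simp add: gate2_def) blast
    qed
  qed (use fB in auto)
  also have "\<dots> = (\<Sum>k\<in>UNIV. ?h (?f k))" by (rule sum.reindex[OF inj_on_subset[OF inj subset_UNIV], unfolded comp_def])
  also have "\<dots> = (if (\<forall>v. v \<noteq> w \<and> v \<noteq> Suc w \<longrightarrow> x' v = x v) then
      (\<Sum>k\<in>UNIV. cnj (Uq k (x' w, x' (Suc w))) * Uq k (x w, x (Suc w))) else 0)"
  proof (cases "\<forall>v. v \<noteq> w \<and> v \<noteq> Suc w \<longrightarrow> x' v = x v")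
    case True
    show ?thesis
    proof -
      have "?h (?f k) = cnj (Uq k (x' w, x' (Suc w))) * Uq k (x w, x (Suc w))" for k
        using True by (cases k) (auto simp: gate2_def)
      then show ?thesis using True by simp
    qed
  next
    case False
    have "?h (?f k) = 0" for k
    proof -
      have "\<not> (\<forall>v. v \<noteq> w \<and> v \<noteq> Suc w \<longrightarrow> ?f k v = x' v)" using False by (cases k) auto
      then show ?thesis by (simp add: gate2_def) blast
    qed
    then have Z: "(\<Sum>k\<in>UNIV. ?h (?f k)) = 0" by (intro sum.neutral) blast
    show ?thesis by (subst if_not_P[OF False]) (rule Z)
  qed
  also have "\<dots> = (if x' = x then 1 else 0)"
    using U unfolding unitary2_def by (auto simp: fun_eq_iff)
  finally show "(\<Sum>y\<in>?B. ?h y) = (if x' = x then 1 else 0)" .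
qed



lemma gate2_mul:
  assumes x: "x \<in> bits n" "y \<in> bits n" and d: "b \<noteq> a" "b \<noteq> Suc a" "a \<noteq> Suc b"
  shows "mmul (bits n) (gate2 a Ua) (gate2 b Ub) y x =
    (if (\<forall>v. v \<noteq> a \<and> v \<noteq> Suc a \<and> v \<noteq> b \<and> v \<noteq> Suc b \<longrightarrow> y v = x v)
     then Ua (y a, y (Suc a)) (x a, x (Suc a)) * Ub (y b, y (Suc b)) (x b, x (Suc b)) else 0)"
proof -
  let ?k = "\<lambda>v. if v = a \<or> v = Suc a then x v else y v"
  have kB: "?k \<in> bits n" using x by (auto simp: bits_def)
  have "mmul (bits n) (gate2 a Ua) (gate2 b Ub) y x = (\<Sum>k\<in>bits n. gate2 a Ua y k * gate2 b Ub k x)"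
    by (simp add: mmul_def)
  also have "\<dots> = gate2 a Ua y ?k * gate2 b Ub ?k x"
  proof (subst sum_single[where a = ?k])
    show "finite (bits n)" by simp
    fix k assume "k \<in> bits n" "k \<noteq> ?k"
    moreover have "k = ?k" if "\<forall>v. v \<noteq> a \<and> v \<noteq> Suc a \<longrightarrow> y v = k v" "\<forall>v. v \<noteq> b \<and> v \<noteq> Suc b \<longrightarrow> k v = x v"
    proof
      fix v show "k v = ?k v" using that d by (cases "v = a \<or> v = Suc a") auto
    qed
    ultimately have "\<not> (\<forall>v. v \<noteq> a \<and> v \<noteq> Suc a \<longrightarrow> y v = k v) \<or> \<not> (\<forall>v. v \<noteq> b \<and> v \<noteq> Suc b \<longrightarrow> k v = x v)" by blast
    then show "gate2 a Ua y k * gate2 b Ub k x = 0" unfolding gate2_def by auto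
  qed (simp add: kB)
  also have "\<dots> = (if (\<forall>v. v \<noteq> a \<and> v \<noteq> Suc a \<and> v \<noteq> b \<and> v \<noteq> Suc b \<longrightarrow> y v = x v)
     then Ua (y a, y (Suc a)) (x a, x (Suc a)) * Ub (y b, y (Suc b)) (x b, x (Suc b)) else 0)"
  proof -
    have c: "(\<forall>v. v \<noteq> b \<and> v \<noteq> Suc b \<longrightarrow> ?k v = x v) \<longleftrightarrow>
             (\<forall>v. v \<noteq> a \<and> v \<noteq> Suc a \<and> v \<noteq> b \<and> v \<noteq> Suc b \<longrightarrow> y v = x v)" by auto
    have v: "?k a = x a" "?k (Suc a) = x (Suc a)" "?k b = y b" "?k (Suc b) = y (Suc b)" using d by auto
    show ?thesis unfolding gate2_def c v by auto
  qed
  finally show ?thesis .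
qed

lemma gate2_comm:
  assumes d: "b \<noteq> a" "b \<noteq> Suc a" "a \<noteq> Suc b"
  shows "eqB n (mmul (bits n) (gate2 a Ua) (gate2 b Ub)) (mmul (bits n) (gate2 b Ub) (gate2 a Ua))"
  unfolding eqB_def
proof (intro ballI)
  fix y x assume "y \<in> bits n" "x \<in> bits n"
  then show "mmul (bits n) (gate2 a Ua) (gate2 b Ub) y x = mmul (bits n) (gate2 b Ub) (gate2 a Ua) y x"
    using d by (simp add: gate2_mul conj_ac mult.commute) blast
qed



lemma mem_plaq_list: "(i, j) \<in> set (plaq_list n) \<longleftrightarrow> i < n \<and> j < n \<and> n + j - i < 2*n"
proof
  assume "(i, j) \<in> set (plaq_list n)" then show "i < n \<and> j < n \<and> n + j - i < 2*n"
    by (auto simp: plaq_list_def)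
next
  assume h: "i < n \<and> j < n \<and> n + j - i < 2*n"
  show "(i, j) \<in> set (plaq_list n)"
    unfolding plaq_list_def set_concat set_map
    apply (rule UnionI[where X = "set (concat (map (\<lambda>i'. map (\<lambda>j'. (i', j')) (filter (\<lambda>j'. n + j' - i' = n + j - i) [0..<n])) [0..<n]))"])
     apply (rule image_eqI[OF _ imageI[where x = "n + j - i"]])
    using h by auto
qed

lemma set_plaq_list: "set (plaq_list n) = plaqs n"
proof -
  have "p \<in> set (plaq_list n) \<longleftrightarrow> p \<in> plaqs n" for p
    by (cases p) (auto simp: mem_plaq_list plaqs_def)
  then show ?thesis by blast
qed

lemma distinct_concat_map:
  assumes "distinct xs" "\<And>x. x \<in> set xs \<Longrightarrow> distinct (f x)"
    "\<And>x y. x \<in> set xs \<Longrightarrow> y \<in> set xs \<Longrightarrow> x \<noteq> y \<Longrightarrow> set (f x) \<inter> set (f y) = {}"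
  shows "distinct (concat (map f xs))"
  using assms
proof (induction xs)
  case (Cons a xs)
  have "set (f a) \<inter> set (concat (map f xs)) = {}"
  proof -
    have "set (f a) \<inter> set (f y) = {}" if "y \<in> set xs" for y
      using Cons.prems that by (metis distinct.simps(2) list.set_intros)
    then show ?thesis by auto
  qed
  then show ?case using Cons by auto
qed simp

lemma distinct_plaq_list: "distinct (plaq_list n)"
  unfolding plaq_list_def
proof (rule distinct_concat_map)
  fix t
  show "distinct (concat (map (\<lambda>i. map (\<lambda>j. (i, j)) (filter (\<lambda>j. n + j - i = t) [0..<n])) [0..<n]))"
    by (rule distinct_concat_map) (auto simp: distinct_map inj_on_def)
next
  fix t t' :: nat assume "t \<noteq> t'"
  then show "set (concat (map (\<lambda>i. map (\<lambda>j. (i, j)) (filter (\<lambda>j. n + j - i = t) [0..<n])) [0..<n])) \<inter>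
             set (concat (map (\<lambda>i. map (\<lambda>j. (i, j)) (filter (\<lambda>j. n + j - i = t') [0..<n])) [0..<n])) = {}"
    by auto
qed simp

lemma sorted_const: "(\<And>a. a \<in> set ys \<Longrightarrow> a = (c::nat)) \<Longrightarrow> sorted ys"
  by (induction ys) auto

lemma sorted_concat_map:
  assumes "sorted xs" "\<And>t a. t \<in> set xs \<Longrightarrow> a \<in> set (f t) \<Longrightarrow> key a = (t::nat)"
  shows "sorted (map key (concat (map f xs)))"
  using assms
proof (induction xs)
  case (Cons x xs)
  have "sorted (map key (f x))" by (rule sorted_const[where c = x]) (use Cons.prems in auto)
  moreover have "sorted (map key (concat (map f xs)))" using Cons by auto
  moreover have "\<forall>a\<in>set (f x). \<forall>b\<in>set (concat (map f xs)). key a \<le> key b"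
  proof (intro ballI)
    fix a b assume a: "a \<in> set (f x)" and b: "b \<in> set (concat (map f xs))"
    then obtain y where y: "y \<in> set xs" "b \<in> set (f y)" by auto
    have "key a = x" using Cons.prems a by auto
    moreover have "key b = y" using Cons.prems y by auto
    moreover have "x \<le> y" using Cons.prems(1) y by auto
    ultimately show "key a \<le> key b" by simp
  qed
  ultimately show ?case by (auto simp: sorted_append)
qed simp

lemma sorted_plaq_list: "sorted (map (pt n) (plaq_list n))"
  unfolding plaq_list_def by (rule sorted_concat_map) (auto simp: pt_def)



abbreviation gst :: "nat \<Rightarrow> (nat \<times> nat \<Rightarrow> (bool \<times> bool) op) \<Rightarrow> (nat \<Rightarrow> bool) op \<Rightarrow> nat \<times> nat \<Rightarrow> (nat \<Rightarrow> bool) op" where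
  "gst n U \<equiv> (\<lambda>M p. mmul (bits n) (gate2 (pw p) (U p)) M)"

lemma Vz_foldl: "Vz n U z = foldl (gst n U) idop (filter (leftof z) (plaq_list n))"
  by (simp add: Vz_def)

lemma foldl_eqB: "eqB n M N \<Longrightarrow> eqB n (foldl (gst n U) M qs) (foldl (gst n U) N qs)"
  by (induction qs arbitrary: M N) (auto intro: eqB_mmul_right)

lemma foldl_unit: "unitB n M \<Longrightarrow> (\<forall>q\<in>set qs. unitB n (gate2 (pw q) (U q))) \<Longrightarrow> unitB n (foldl (gst n U) M qs)"
  by (induction qs arbitrary: M) (auto intro: unit_mmul)

lemma gst_comm:
  assumes "pw q \<noteq> pw p" "pw q \<noteq> Suc (pw p)" "pw p \<noteq> Suc (pw q)"
  shows "eqB n (gst n U (gst n U M p) q) (gst n U (gst n U M q) p)"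
proof -
  let ?B = "bits n"
  have "gst n U (gst n U M p) q = mmul ?B (mmul ?B (gate2 (pw q) (U q)) (gate2 (pw p) (U p))) M"
    by (simp add: mmul_assoc)
  moreover have "gst n U (gst n U M q) p = mmul ?B (mmul ?B (gate2 (pw p) (U p)) (gate2 (pw q) (U q))) M"
    by (simp add: mmul_assoc)
  moreover have "eqB n (mmul ?B (gate2 (pw q) (U q)) (gate2 (pw p) (U p))) (mmul ?B (gate2 (pw p) (U p)) (gate2 (pw q) (U q)))"
    by (rule gate2_comm) (use assms in auto)
  ultimately show ?thesis by (simp add: eqB_mmul_left)
qed

lemma foldl_comm:
  assumes "\<forall>q\<in>set ys. pw q \<noteq> pw p \<and> pw q \<noteq> Suc (pw p) \<and> pw p \<noteq> Suc (pw q)"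
  shows "eqB n (foldl (gst n U) (gst n U M p) ys) (gst n U (foldl (gst n U) M ys) p)"
  using assms
proof (induction ys arbitrary: M)
  case Nil then show ?case by (simp add: eqB_refl)
next
  case (Cons q ys)
  have "eqB n (foldl (gst n U) (gst n U (gst n U M p) q) ys) (foldl (gst n U) (gst n U (gst n U M q) p) ys)"
    by (rule foldl_eqB, rule gst_comm) (use Cons.prems in auto)
  moreover have "eqB n (foldl (gst n U) (gst n U (gst n U M q) p) ys) (gst n U (foldl (gst n U) (gst n U M q) ys) p)"
    using Cons by auto
  ultimately show ?case by (auto intro: eqB_trans)
qed

lemma Vz_unit:
  assumes "\<forall>p\<in>plaqs n. unitary2 (U p)"
  shows "unitB n (Vz n U z)"
  unfolding Vz_foldl
proof (rule foldl_unit[OF unit_idop], intro ballI)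
  fix q assume "q \<in> set (filter (leftof z) (plaq_list n))"
  then have q: "q \<in> plaqs n" using set_plaq_list by auto
  show "unitB n (gate2 (pw q) (U q))" using assms q plaq_w[OF q] by (intro gate2_unit) auto
qed



lemma V_swap:
  assumes z: "z \<in> strings n" and w: "1 \<le> w" "Suc w \<le> 2*n" and zw: "\<not> z w" "z (Suc w)"
  shows "eqB n (Vz n U (sw w z)) (mmul (bits n) (gate2 w (U (vpos z (w - 1)))) (Vz n U z))"
proof -
  define p where "p = vpos z (w - 1)"
  obtain k where k: "w = Suc k" using w by (cases w) auto
  have pk: "p = vpos z k" using k p_def by simp
  have vw: "vpos z w = (Suc (fst p), snd p)" using zw unfolding k pk by (simp add: vpos_Suc)
  have vw1: "vpos z (Suc w) = (Suc (fst p), Suc (snd p))" using zw vw by (simp add: vpos_Suc)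
  have vsw: "vpos (sw w z) w = (fst p, Suc (snd p))"
    using zw unfolding k pk by (simp add: vpos_Suc sw_apply vpos_sw_lt)
  have pwp: "pw p = w" using vpos_sum[of z k] k pk by (simp add: pw_def)
  have pP: "p \<in> plaqs n"
  proof -
    have "fst (vpos z (Suc w)) \<le> n" "snd (vpos z (Suc w)) \<le> n"
      using strings_vpos_le[OF z, of "Suc w"] w by auto
    then show ?thesis using vw1 by (auto simp: plaqs_def mem_Times_iff)
  qed
  have lsw: "leftof (sw w z) q \<longleftrightarrow> leftof z q \<or> q = p" for q
  proof (cases "pw q = w")
    case True
    have "q = p" if "fst q = fst p" using True that pwp by (auto simp: pw_def prod_eq_iff)
    then show ?thesis using True vw vsw by (auto simp: leftof_def) (metis Suc_leI le_neq_implies_less)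
  next
    case False
    then have "q \<noteq> p" using pwp by auto
    moreover have "vpos (sw w z) (pw q) = vpos z (pw q)" using False w by (simp add: vpos_sw_ne)
    ultimately show ?thesis by (simp add: leftof_def)
  qed
  have nlp: "\<not> leftof z p" using vw pwp by (simp add: leftof_def)
  have "p \<in> set (plaq_list n)" using pP set_plaq_list by auto
  then obtain L1 L2 where L: "plaq_list n = L1 @ p # L2" by (meson split_list)
  have dist: "p \<notin> set L1" "p \<notin> set L2" using distinct_plaq_list[of n] unfolding L by auto
  have f1: "filter (leftof (sw w z)) (plaq_list n) = filter (leftof z) L1 @ p # filter (leftof z) L2"
  proof -
    have "filter (leftof (sw w z)) L1 = filter (leftof z) L1"
      by (rule filter_cong) (use dist lsw in auto)
    moreover have "filter (leftof (sw w z)) L2 = filter (leftof z) L2"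
      by (rule filter_cong) (use dist lsw in auto)
    ultimately show ?thesis unfolding L using lsw by simp
  qed
  have f2: "filter (leftof z) (plaq_list n) = filter (leftof z) L1 @ filter (leftof z) L2"
    unfolding L using nlp by simp
  have comm: "\<forall>q\<in>set (filter (leftof z) L2). pw q \<noteq> pw p \<and> pw q \<noteq> Suc (pw p) \<and> pw p \<noteq> Suc (pw q)"
  proof
    fix q assume q: "q \<in> set (filter (leftof z) L2)"
    then have qP: "q \<in> plaqs n" using set_plaq_list[of n] unfolding L by auto
    have lq: "fst q \<ge> fst (vpos z (pw q))" using q by (simp add: leftof_def)
    have "sorted (map (pt n) (L1 @ p # L2))" using sorted_plaq_list[of n] unfolding L .
    then have ptle: "pt n p \<le> pt n q" using q by (auto simp: sorted_append)
    have pl: "fst p < n" "snd p < n" "fst q < n" "snd q < n" using pP qP by (auto simp: plaqs_def mem_Times_iff)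
    show "pw q \<noteq> pw p \<and> pw q \<noteq> Suc (pw p) \<and> pw p \<noteq> Suc (pw q)"
    proof (intro conjI notI)
      assume a: "pw q = pw p"
      then have "fst q \<ge> Suc (fst p)" using lq vw pwp by simp
      then show False using a ptle pl by (simp add: pw_def pt_def)
    next
      assume a: "pw q = Suc (pw p)"
      then have "fst q \<ge> Suc (fst p)" using lq vw1 pwp by simp
      then show False using a ptle pl by (simp add: pw_def pt_def)
    next
      assume a: "pw p = Suc (pw q)"
      then have "pw q = k" using pwp k by simp
      then have "fst q \<ge> fst p" using lq pk by simp
      then show False using a ptle pl by (simp add: pw_def pt_def)
    qed
  qed
  let ?g = "gst n U" and ?A1 = "filter (leftof z) L1" and ?A2 = "filter (leftof z) L2"
  have "Vz n U (sw w z) = foldl ?g (?g (foldl ?g idop ?A1) p) ?A2"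
    unfolding Vz_foldl f1 by simp
  moreover have "eqB n (foldl ?g (?g (foldl ?g idop ?A1) p) ?A2) (?g (foldl ?g (foldl ?g idop ?A1) ?A2) p)"
    by (rule foldl_comm[OF comm])
  moreover have "?g (foldl ?g (foldl ?g idop ?A1) ?A2) p = mmul (bits n) (gate2 w (U p)) (Vz n U z)"
    unfolding Vz_foldl f2 pwp by simp
  ultimately show ?thesis using p_def by simp
qed



lemma ket_sum:
  assumes "finite C" "\<And>y. y \<in> Y \<Longrightarrow> g y \<in> C"
  shows "(\<Sum>c\<in>C. (\<Sum>y\<in>Y. a y * ket (g y) c) * h c) = (\<Sum>y\<in>Y. a y * h (g y))"
proof -
  have "(\<Sum>c\<in>C. (\<Sum>y\<in>Y. a y * ket (g y) c) * h c) = (\<Sum>c\<in>C. \<Sum>y\<in>Y. a y * (ket (g y) c * h c))"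
    by (simp add: sum_distrib_right mult.assoc)
  also have "\<dots> = (\<Sum>y\<in>Y. \<Sum>c\<in>C. a y * (ket (g y) c * h c))" by (rule sum.swap)
  also have "\<dots> = (\<Sum>y\<in>Y. a y * h (g y))"
  proof (rule sum.cong[OF refl])
    fix y assume y: "y \<in> Y"
    show "(\<Sum>c\<in>C. a y * (ket (g y) c * h c)) = a y * h (g y)"
      by (subst sum_single[where a = "g y"]) (auto simp: assms y ket_def)
  qed
  finally show ?thesis .
qed

lemma cnj_ket: "cnj (ket a c) = ket a c" by (simp add: ket_def)

lemma sandwich_expand:
  assumes "finite C" "\<And>y. y \<in> Y \<Longrightarrow> g y \<in> C" "\<And>y. y \<in> Y' \<Longrightarrow> g' y \<in> C"
  shows "sandwich C (\<lambda>c. \<Sum>y\<in>Y'. a' y * ket (g' y) c) A (\<lambda>c. \<Sum>y\<in>Y. a y * ket (g y) c)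
     = (\<Sum>y'\<in>Y'. \<Sum>y\<in>Y. cnj (a' y') * A (g' y') (g y) * a y)"
proof -
  have "sandwich C (\<lambda>c. \<Sum>y\<in>Y'. a' y * ket (g' y) c) A (\<lambda>c. \<Sum>y\<in>Y. a y * ket (g y) c)
     = (\<Sum>c'\<in>C. (\<Sum>y'\<in>Y'. cnj (a' y') * ket (g' y') c') * (\<Sum>c\<in>C. (\<Sum>y\<in>Y. a y * ket (g y) c) * A c' c))"
    unfolding sandwich_def
  proof (rule sum.cong[OF refl])
    fix c' show "(\<Sum>c\<in>C. cnj (\<Sum>y\<in>Y'. a' y * ket (g' y) c') * A c' c * (\<Sum>y\<in>Y. a y * ket (g y) c)) =
       (\<Sum>y'\<in>Y'. cnj (a' y') * ket (g' y') c') * (\<Sum>c\<in>C. (\<Sum>y\<in>Y. a y * ket (g y) c) * A c' c)"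
    proof -
      have gen: "\<And>P (Q::'a \<Rightarrow> complex) B. (\<Sum>c\<in>C. P * B c * Q c) = P * (\<Sum>c\<in>C. Q c * B c)"
        by (simp add: sum_distrib_left mult_ac)
      have cj: "cnj (\<Sum>y\<in>Y'. a' y * ket (g' y) c') = (\<Sum>y'\<in>Y'. cnj (a' y') * ket (g' y') c')"
        by (simp add: cnj_ket)
      show ?thesis unfolding cj by (rule gen)
    qed
  qed
  also have "\<dots> = (\<Sum>c'\<in>C. (\<Sum>y'\<in>Y'. cnj (a' y') * ket (g' y') c') * (\<Sum>y\<in>Y. a y * A c' (g y)))"
    by (simp add: ket_sum[OF assms(1,2)])
  also have "\<dots> = (\<Sum>y'\<in>Y'. cnj (a' y') * (\<Sum>y\<in>Y. a y * A (g' y') (g y)))"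
    by (rule ket_sum[OF assms(1,3)])
  also have "\<dots> = (\<Sum>y'\<in>Y'. \<Sum>y\<in>Y. cnj (a' y') * A (g' y') (g y) * a y)"
    by (simp add: sum_distrib_left mult_ac)
  finally show ?thesis .
qed



lemma hop_str:
  assumes y: "y \<in> bits n" "y' \<in> bits n" and z: "z \<in> strings n" "z' \<in> strings n"
    and w: "1 \<le> w" "Suc w \<le> 2*n"
  shows "hop n U y z w (strcfg n y' z') = (if z' = sw w z then
      (if z w then - cnj (gate2 w (U (vpos z (w - 1))) y y') else - gate2 w (U (vpos z (w - 1))) y' y) else 0)"
proof -
  have zb: "z \<in> bits n" "z' \<in> bits n" "sw w z \<in> bits n" using z w by (auto simp: strings_bits sw_bits)
  have ex: "(\<exists>\<beta> \<delta>. strcfg n y' z' = strcfg n (y(w := \<beta>, Suc w := \<delta>)) (sw w z)) \<longleftrightarrow>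
        (z' = sw w z \<and> (\<forall>v. v \<noteq> w \<and> v \<noteq> Suc w \<longrightarrow> y' v = y v))"
  proof
    assume "\<exists>\<beta> \<delta>. strcfg n y' z' = strcfg n (y(w := \<beta>, Suc w := \<delta>)) (sw w z)"
    then obtain \<beta> \<delta> where e: "strcfg n y' z' = strcfg n (y(w := \<beta>, Suc w := \<delta>)) (sw w z)" by blast
    have "y(w := \<beta>, Suc w := \<delta>) \<in> bits n" using y w by (auto simp: bits_def)
    then have "y' = y(w := \<beta>, Suc w := \<delta>) \<and> z' = sw w z" using strcfg_inj[OF e] y zb by auto
    then show "z' = sw w z \<and> (\<forall>v. v \<noteq> w \<and> v \<noteq> Suc w \<longrightarrow> y' v = y v)" by auto
  next
    assume a: "z' = sw w z \<and> (\<forall>v. v \<noteq> w \<and> v \<noteq> Suc w \<longrightarrow> y' v = y v)"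
    then have "y' = y(w := y' w, Suc w := y' (Suc w))" by (auto simp: fun_eq_iff)
    then show "\<exists>\<beta> \<delta>. strcfg n y' z' = strcfg n (y(w := \<beta>, Suc w := \<delta>)) (sw w z)" using a by metis
  qed
  have s1: "snd (strcfg n y' z' w) = y' w" "snd (strcfg n y' z' (Suc w)) = y' (Suc w)"
    using w by (auto simp: strcfg_def)
  have sym: "(\<forall>v. v \<noteq> w \<and> v \<noteq> Suc w \<longrightarrow> y v = y' v) \<longleftrightarrow> (\<forall>v. v \<noteq> w \<and> v \<noteq> Suc w \<longrightarrow> y' v = y v)"
    by auto
  show ?thesis unfolding hop_def ex s1 gate2_def sym by simp blast
qed



lemma strings_finite[simp]: "finite (strings n)"
  using finite_subset[OF _ finite_bits] strings_bits by blast

lemma hop_term: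
  assumes U: "\<forall>p\<in>plaqs n. unitary2 (U p)"
    and x: "x \<in> bits n" "x' \<in> bits n" and z: "z \<in> strings n"
    and w: "1 \<le> w" "Suc w \<le> 2*n" and d: "z w \<noteq> z (Suc w)"
  shows "(\<Sum>y'\<in>bits n. \<Sum>y\<in>bits n. cnj (Vz n U (sw w z) y' x') *
           (if z w then - cnj (gate2 w (U (vpos z (w - 1))) y y') else - gate2 w (U (vpos z (w - 1))) y' y)
           * Vz n U z y x) = - (if x' = x then 1 else 0)"
proof -
  let ?B = "bits n" and ?V = "Vz n U z" and ?V' = "Vz n U (sw w z)"
  let ?G = "gate2 w (U (vpos z (w - 1)))"
  have zs: "sw w z \<in> strings n" using z w by (rule sw_strings)
  show ?thesis
  proof (cases "z w")
    case False
    then have zS: "z (Suc w)" using d by simp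
    have E: "eqB n ?V' (mmul ?B ?G ?V)" using V_swap[OF z w False zS] .
    have "(\<Sum>y'\<in>?B. \<Sum>y\<in>?B. cnj (?V' y' x') * (if z w then - cnj (?G y y') else - ?G y' y) * ?V y x)
        = - (\<Sum>y'\<in>?B. cnj (?V' y' x') * mmul ?B ?G ?V y' x)"
      using False by (simp add: mmul_def sum_distrib_left sum_negf mult_ac)
    also have "\<dots> = - (\<Sum>y'\<in>?B. cnj (?V' y' x') * ?V' y' x)"
      using E x by (simp add: eqB_def)
    also have "\<dots> = - (if x' = x then 1 else 0)"
      using Vz_unit[OF U, of "sw w z"] x by (simp add: unitB_def)
    finally show ?thesis .
  next
    case True
    then have zS: "\<not> z (Suc w)" using d by simp
    let ?z' = "sw w z"
    have a1: "\<not> ?z' w" "?z' (Suc w)" using True zS by (auto simp: sw_apply)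
    have vp: "vpos ?z' (w - 1) = vpos z (w - 1)" using w by (simp add: vpos_sw_lt)
    have E: "eqB n ?V (mmul ?B ?G ?V')" using V_swap[OF zs w a1] vp by simp
    have "(\<Sum>y'\<in>?B. \<Sum>y\<in>?B. cnj (?V' y' x') * (if z w then - cnj (?G y y') else - ?G y' y) * ?V y x)
        = - (\<Sum>y'\<in>?B. \<Sum>y\<in>?B. cnj (?G y y' * ?V' y' x') * ?V y x)"
      using True by (simp add: sum_negf mult_ac)
    also have "\<dots> = - (\<Sum>y\<in>?B. \<Sum>y'\<in>?B. cnj (?G y y' * ?V' y' x') * ?V y x)"
      by (subst sum.swap) simp
    also have "\<dots> = - (\<Sum>y\<in>?B. cnj (mmul ?B ?G ?V' y x') * ?V y x)"
      by (simp add: mmul_def sum_distrib_right)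
    also have "\<dots> = - (\<Sum>y\<in>?B. cnj (?V y x') * ?V y x)"
      using E x by (simp add: eqB_def)
    also have "\<dots> = - (if x' = x then 1 else 0)"
      using Vz_unit[OF U, of z] x by (simp add: unitB_def)
    finally show ?thesis .
  qed
qed



lemma part1:
  assumes n: "n \<ge> 1" and U: "\<forall>p\<in>plaqs n. unitary2 (U p)"
    and x: "x \<in> bits n" "x' \<in> bits n" and z: "z \<in> strings n" "z' \<in> strings n"
  shows "sandwich (cfgs n) (rvec n U x' z')
              (\<lambda>c' c. Hcircuit n lam U c' c - complex_of_real (sqrt (1 - lam\<^sup>2)) * idop c' c)
              (rvec n U x z)
            = 2 * (if x' = x then 1 else 0) * Hxxz n lam z' z"
proof -
  let ?B = "bits n" and ?V = "Vz n U z" and ?V' = "Vz n U z'"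
  let ?s = "complex_of_real (sqrt (1 - lam\<^sup>2))"
  let ?K = "\<lambda>c' c. Hcircuit n lam U c' c - ?s * idop c' c"
  let ?d = "\<lambda>w. z w \<noteq> z (Suc w)"
  define hv where "hv w y' y = (if z' = sw w z then (if z w then - cnj (gate2 w (U (vpos z (w - 1))) y y')
       else - gate2 w (U (vpos z (w - 1))) y' y) else 0)" for w y' y
  have zb: "z \<in> ?B" "z' \<in> ?B" using z by (auto simp: strings_bits)
  have exp: "sandwich (cfgs n) (rvec n U x' z') ?K (rvec n U x z)
     = (\<Sum>y'\<in>?B. \<Sum>y\<in>?B. cnj (?V' y' x') * ?K (strcfg n y' z') (strcfg n y z) * ?V y x)"
    unfolding rvec_def by (rule sandwich_expand) (auto simp: strcfg_cfgs z)
  have Kv: "?K (strcfg n y' z') (strcfg n y z) = (if y' = y \<and> z' = z then Dx n lam z else 0)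
      + complex_of_real lam * (\<Sum>w\<in>{1..<2*n}. if ?d w then hv w y' y else 0)"
    if y: "y \<in> ?B" "y' \<in> ?B" for y y'
  proof -
    have eq: "strcfg n y' z' = strcfg n y z \<longleftrightarrow> y' = y \<and> z' = z" using strcfg_eq_iff y zb by blast
    have hs: "(\<Sum>w\<in>{1..<2*n}. if ?d w then hop n U y z w (strcfg n y' z') else 0)
            = (\<Sum>w\<in>{1..<2*n}. if ?d w then hv w y' y else 0)"
    proof (rule sum.cong[OF refl])
      fix w assume "w \<in> {1..<2*n}"
      then show "(if ?d w then hop n U y z w (strcfg n y' z') else 0) = (if ?d w then hv w y' y else 0)"
        using hop_str[OF y(1,2) z, of w U] by (simp add: hv_def)
    qed
    show ?thesis unfolding Hcircuit_col[OF n z(1)] hs eq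
      by (auto simp: idop_def eq Dc_def Dx_def algebra_simps)
  qed
  have "(\<Sum>y'\<in>?B. \<Sum>y\<in>?B. cnj (?V' y' x') * ?K (strcfg n y' z') (strcfg n y z) * ?V y x)
     = (\<Sum>y'\<in>?B. \<Sum>y\<in>?B. cnj (?V' y' x') * (if y' = y \<and> z' = z then Dx n lam z else 0) * ?V y x)
       + complex_of_real lam * (\<Sum>w\<in>{1..<2*n}. if ?d w then
           (\<Sum>y'\<in>?B. \<Sum>y\<in>?B. cnj (?V' y' x') * hv w y' y * ?V y x) else 0)"
  proof -
    have "(\<Sum>y'\<in>?B. \<Sum>y\<in>?B. cnj (?V' y' x') * ?K (strcfg n y' z') (strcfg n y z) * ?V y x)
      = (\<Sum>y'\<in>?B. \<Sum>y\<in>?B. cnj (?V' y' x') * (if y' = y \<and> z' = z then Dx n lam z else 0) * ?V y x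
         + complex_of_real lam * (\<Sum>w\<in>{1..<2*n}. if ?d w then cnj (?V' y' x') * hv w y' y * ?V y x else 0))"
    proof (intro sum.cong refl)
      fix y' y assume y': "y' \<in> ?B" and y: "y \<in> ?B"
      have g: "\<And>(a::complex) A l W P h v. a * (A + l * (\<Sum>w\<in>W. if P w then h w else 0)) * v
           = a * A * v + l * (\<Sum>w\<in>W. if P w then a * h w * v else 0)"
        by (simp add: algebra_simps sum_distrib_left sum_distrib_right if_distrib cong: if_cong)
      show "cnj (?V' y' x') * ?K (strcfg n y' z') (strcfg n y z) * ?V y x
         = cnj (?V' y' x') * (if y' = y \<and> z' = z then Dx n lam z else 0) * ?V y x
         + complex_of_real lam * (\<Sum>w\<in>{1..<2*n}. if ?d w then cnj (?V' y' x') * hv w y' y * ?V y x else 0)"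
        by (subst Kv[OF y y']) (rule g)
    qed
    also have "\<dots> = (\<Sum>y'\<in>?B. \<Sum>y\<in>?B. cnj (?V' y' x') * (if y' = y \<and> z' = z then Dx n lam z else 0) * ?V y x)
       + complex_of_real lam * (\<Sum>y'\<in>?B. \<Sum>y\<in>?B. \<Sum>w\<in>{1..<2*n}. if ?d w then cnj (?V' y' x') * hv w y' y * ?V y x else 0)"
      by (simp add: sum.distrib sum_distrib_left)
    also have "(\<Sum>y'\<in>?B. \<Sum>y\<in>?B. \<Sum>w\<in>{1..<2*n}. if ?d w then cnj (?V' y' x') * hv w y' y * ?V y x else 0)
       = (\<Sum>w\<in>{1..<2*n}. if ?d w then (\<Sum>y'\<in>?B. \<Sum>y\<in>?B. cnj (?V' y' x') * hv w y' y * ?V y x) else 0)"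
    proof -
      have "(\<Sum>y'\<in>?B. \<Sum>y\<in>?B. \<Sum>w\<in>{1..<2*n}. if ?d w then cnj (?V' y' x') * hv w y' y * ?V y x else 0)
          = (\<Sum>y'\<in>?B. \<Sum>w\<in>{1..<2*n}. \<Sum>y\<in>?B. if ?d w then cnj (?V' y' x') * hv w y' y * ?V y x else 0)"
        by (rule sum.cong[OF refl]) (rule sum.swap)
      also have "\<dots> = (\<Sum>w\<in>{1..<2*n}. \<Sum>y'\<in>?B. \<Sum>y\<in>?B. if ?d w then cnj (?V' y' x') * hv w y' y * ?V y x else 0)"
        by (rule sum.swap)
      also have "\<dots> = (\<Sum>w\<in>{1..<2*n}. if ?d w then (\<Sum>y'\<in>?B. \<Sum>y\<in>?B. cnj (?V' y' x') * hv w y' y * ?V y x) else 0)"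
        by (rule sum.cong[OF refl]) simp
      finally show ?thesis .
    qed
    finally show ?thesis .
  qed
  also have "(\<Sum>y'\<in>?B. \<Sum>y\<in>?B. cnj (?V' y' x') * (if y' = y \<and> z' = z then Dx n lam z else 0) * ?V y x)
      = (if z' = z then Dx n lam z * (if x' = x then 1 else 0) else 0)"
  proof (cases "z' = z")
    case True
    have "(\<Sum>y'\<in>?B. \<Sum>y\<in>?B. cnj (?V' y' x') * (if y' = y \<and> z' = z then Dx n lam z else 0) * ?V y x)
        = (\<Sum>y'\<in>?B. Dx n lam z * (cnj (?V y' x') * ?V y' x))"
    proof (rule sum.cong[OF refl])
      fix y' assume y': "y' \<in> ?B"
      show "(\<Sum>y\<in>?B. cnj (?V' y' x') * (if y' = y \<and> z' = z then Dx n lam z else 0) * ?V y x)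
          = Dx n lam z * (cnj (?V y' x') * ?V y' x)"
        by (subst sum_single[where a = y']) (auto simp: y' True)
    qed
    also have "\<dots> = Dx n lam z * (if x' = x then 1 else 0)"
      using Vz_unit[OF U, of z] x by (simp add: unitB_def sum_distrib_left[symmetric])
    finally show ?thesis using True by simp
  qed simp
  also have "(\<Sum>w\<in>{1..<2*n}. if ?d w then (\<Sum>y'\<in>?B. \<Sum>y\<in>?B. cnj (?V' y' x') * hv w y' y * ?V y x) else 0)
      = (\<Sum>w\<in>{1..<2*n}. if ?d w \<and> z' = sw w z then - (if x' = x then 1 else 0) else 0)"
  proof (rule sum.cong[OF refl])
    fix w assume w: "w \<in> {1..<2*n}"
    show "(if ?d w then (\<Sum>y'\<in>?B. \<Sum>y\<in>?B. cnj (?V' y' x') * hv w y' y * ?V y x) else 0)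
        = (if ?d w \<and> z' = sw w z then - (if x' = x then 1 else 0) else 0)"
    proof (cases "?d w \<and> z' = sw w z")
      case True
      then show ?thesis using hop_term[OF U x z(1)] w unfolding hv_def by simp
    next
      case False
      then show ?thesis by (auto simp: hv_def)
    qed
  qed
  finally have S: "sandwich (cfgs n) (rvec n U x' z') ?K (rvec n U x z) =
      (if z' = z then Dx n lam z * (if x' = x then 1 else 0) else 0)
      + complex_of_real lam * (\<Sum>w\<in>{1..<2*n}. if ?d w \<and> z' = sw w z then - (if x' = x then 1 else 0) else 0)"
    using exp by simp
  have "2 * Hxxz n lam z' z = (if z' = z then Dx n lam z else 0)
     - complex_of_real lam * (\<Sum>w\<in>{1..<2*n}. if ?d w \<and> z' = sw w z then 1 else 0)"
    by (rule Hxxz_eval[OF zb])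
  moreover have neg: "\<And>(W::nat set) P (c::complex). (\<Sum>w\<in>W. if P w then - c else 0) = - c * (\<Sum>w\<in>W. if P w then 1 else 0)"
  proof -
    fix W :: "nat set" and P and c :: complex
    have "(\<Sum>w\<in>W. if P w then - c else 0) = (\<Sum>w\<in>W. - c * (if P w then 1 else 0))"
      by (rule sum.cong) auto
    then show "(\<Sum>w\<in>W. if P w then - c else 0) = - c * (\<Sum>w\<in>W. if P w then 1 else 0)"
      by (simp add: sum_distrib_left)
  qed
  ultimately show ?thesis unfolding S neg
    by (cases "x' = x") simp_all
qed



lemma Hsupp:
  assumes n: "n \<ge> 1" and z: "z \<in> strings n" and y: "y \<in> bits n"
    and ne: "Hcircuit n lam U c' (strcfg n y z) \<noteq> 0"
  shows "\<exists>y0\<in>bits n. \<exists>z0\<in>strings n. c' = strcfg n y0 z0"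
proof (rule ccontr)
  assume nc: "\<not> (\<exists>y0\<in>bits n. \<exists>z0\<in>strings n. c' = strcfg n y0 z0)"
  then have c1: "c' \<noteq> strcfg n y z" using y z by blast
  have H0: "hop n U y z w c' = 0" if w: "w \<in> {1..<2*n}" for w
  proof -
    have "\<not> (\<exists>\<beta> \<delta>. c' = strcfg n (y(w := \<beta>, Suc w := \<delta>)) (sw w z))"
    proof
      assume "\<exists>\<beta> \<delta>. c' = strcfg n (y(w := \<beta>, Suc w := \<delta>)) (sw w z)"
      then obtain \<beta> \<delta> where e: "c' = strcfg n (y(w := \<beta>, Suc w := \<delta>)) (sw w z)" by blast
      have "y(w := \<beta>, Suc w := \<delta>) \<in> bits n" using y w by (auto simp: bits_def)
      moreover have "sw w z \<in> strings n" using z w by (intro sw_strings) auto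
      ultimately show False using nc e by blast
    qed
    then show ?thesis by (simp add: hop_def)
  qed
  have "(\<Sum>w\<in>{1..<2*n}. if z w \<noteq> z (Suc w) then hop n U y z w c' else 0) = 0"
    by (rule sum.neutral) (use H0 in auto)
  then have "Hcircuit n lam U c' (strcfg n y z) = 0"
    unfolding Hcircuit_col[OF n z] using c1 by simp
  then show False using ne by simp
qed

lemma part2:
  assumes n: "n \<ge> 1" and psi: "\<psi> \<in> Sstring n"
  shows "apply_op (cfgs n) (Hcircuit n lam U) \<psi> \<in> Sstring n"
proof -
  let ?B = "bits n" and ?S = "strings n" and ?H = "Hcircuit n lam U"
  obtain a where a: "\<psi> = (\<lambda>c. \<Sum>(x,z)\<in>?B \<times> ?S. a x z * ket (strcfg n x z) c)"
    using psi unfolding Sstring_def by blast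
  let ?a = "\<lambda>p. a (fst p) (snd p)" and ?g = "\<lambda>p. strcfg n (fst p) (snd p)"
  have psi2: "\<psi> = (\<lambda>c. \<Sum>p\<in>?B \<times> ?S. ?a p * ket (?g p) c)" unfolding a by (simp add: case_prod_beta)
  define b where "b x' z' = (\<Sum>p\<in>?B \<times> ?S. ?a p * ?H (strcfg n x' z') (?g p))" for x' z'
  have gC: "?g p \<in> cfgs n" if "p \<in> ?B \<times> ?S" for p using that by (auto simp: strcfg_cfgs)
  have fin: "finite (?B \<times> ?S)" by simp
  have app: "apply_op (cfgs n) ?H \<psi> c' = (if c' \<in> cfgs n then (\<Sum>p\<in>?B \<times> ?S. ?a p * ?H c' (?g p)) else 0)" for c'
  proof -
    have "(\<Sum>c\<in>cfgs n. ?H c' c * \<psi> c) = (\<Sum>c\<in>cfgs n. (\<Sum>p\<in>?B \<times> ?S. ?a p * ket (?g p) c) * ?H c' c)"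
      unfolding psi2 by (simp add: mult.commute)
    also have "\<dots> = (\<Sum>p\<in>?B \<times> ?S. ?a p * ?H c' (?g p))" by (rule ket_sum[OF finite_cfgs gC])
    finally show ?thesis by (simp add: apply_op_def)
  qed
  have main: "apply_op (cfgs n) ?H \<psi> c' = (\<Sum>p\<in>?B \<times> ?S. b (fst p) (snd p) * ket (?g p) c')" for c'
  proof (cases "\<exists>q\<in>?B \<times> ?S. c' = ?g q")
    case True
    then obtain q where q: "q \<in> ?B \<times> ?S" "c' = ?g q" by blast
    have inj: "strcfg n (fst q) (snd q) = strcfg n x z \<longleftrightarrow> (x, z) = q" if "x \<in> ?B" "z \<in> ?S" for x z
      using strcfg_eq_iff[of x n "fst q" z "snd q"] that q(1)
      by (auto simp: strings_bits prod_eq_iff)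
    have "(\<Sum>p\<in>?B \<times> ?S. b (fst p) (snd p) * ket (?g p) c') = b (fst q) (snd q)"
      by (subst sum_single[where a = q]) (auto simp: q ket_def inj)
    also have "\<dots> = apply_op (cfgs n) ?H \<psi> c'" unfolding app b_def using q gC by simp
    finally show ?thesis by simp
  next
    case False
    have r: "(\<Sum>p\<in>?B \<times> ?S. b (fst p) (snd p) * ket (?g p) c') = 0"
      by (rule sum.neutral) (use False in \<open>auto simp: ket_def\<close>)
    have "?H c' (?g p) = 0" if "p \<in> ?B \<times> ?S" for p
      using Hsupp[OF n, of "snd p" "fst p" lam U c'] that False by (auto simp: mem_Times_iff)
    then have "apply_op (cfgs n) ?H \<psi> c' = 0" unfolding app by simp
    then show ?thesis using r by simp
  qed
  show ?thesis unfolding Sstring_def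
    by (rule CollectI, rule exI[where x = b]) (simp add: fun_eq_iff main case_prod_beta)
qed


theorem mainTheorem4:
  fixes n :: nat and lam :: real
    and U :: "nat \<times> nat \<Rightarrow> (bool \<times> bool) op"
  assumes "n \<ge> 1"
    and "0 \<le> lam" and "lam \<le> 1"
    and "\<forall>p\<in>plaqs n. unitary2 (U p)"
  shows "(\<forall>x\<in>bits n. \<forall>x'\<in>bits n. \<forall>z\<in>strings n. \<forall>z'\<in>strings n.
            sandwich (cfgs n) (rvec n U x' z')
              (\<lambda>c' c. Hcircuit n lam U c' c - complex_of_real (sqrt (1 - lam\<^sup>2)) * idop c' c)
              (rvec n U x z)
            = 2 * (if x' = x then 1 else 0) * Hxxz n lam z' z)
       \<and> (\<forall>\<psi>\<in>Sstring n. apply_op (cfgs n) (Hcircuit n lam U) \<psi> \<in> Sstring n)"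
proof (intro conjI ballI)
  fix x x' z z' assume "x \<in> bits n" "x' \<in> bits n" "z \<in> strings n" "z' \<in> strings n"
  then show "sandwich (cfgs n) (rvec n U x' z')
              (\<lambda>c' c. Hcircuit n lam U c' c - complex_of_real (sqrt (1 - lam\<^sup>2)) * idop c' c)
              (rvec n U x z)
            = 2 * (if x' = x then 1 else 0) * Hxxz n lam z' z"
    by (rule part1[OF assms(1) assms(4)])
next
  fix \<psi> assume "\<psi> \<in> Sstring n"
  then show "apply_op (cfgs n) (Hcircuit n lam U) \<psi> \<in> Sstring n"
    by (rule part2[OF assms(1)])
qed

end
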